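(* For all $n\ge 2$, $PT_n=\ker(\varphi_{PT})$ is isomorphic to $PL_n=\ker(\psi_P)$.
   Context: For $n\ge 2$, the twisted virtual braid group $TVB_n$ is the group with generators $\sigma_1,\dots,\sigma_{n-1}$, $\rho_1,\dots,\rho_{n-1}$, $\gamma_1,\dots,\gamma_n$ and defining relations: $\sigma_i\sigma_{i+1}\sigma_i=\sigma_{i+1}\sigma_i\sigma_{i+1}$ ($1\le i\le n-2$); $\sigma_i\sigma_j=\sigma_j\sigma_i$ ($|i-j|\ge 2$); $\rho_i^2=1$; $\rho_i\rho_j=\rho_j\rho_i$ ($|i-j|\ge2$); $\rho_i\rho_{i+1}\rho_i=\rho_{i+1}\rho_i\rho_{i+1}$ ($1\le i\le n-2$); $\sigma_i\rho_j=\rho_j\sigma_i$ ($|i-j|\ge 2$); $\rho_i\rho_{i+1}\sigma_i=\sigma_{i+1}\rho_i\rho_{i+1}$ ($1\le i\le n-2$); $\gamma_i^2=1$ and $\gamma_i\gamma_j=\gamma_j\gamma_i$ (all $i,j$); $\gamma_j\rho_i=\rho_i\gamma_j$ and $\gamma_j\sigma_i=\sigma_i\gamma_j$ for $j\notin\{i,i+1\}$; $\rho_i\gamma_i=\gamma_{i+1}\rho_i$ ($1\le i\le n-1$); $\rho_i\sigma_i\rho_i=\gamma_{i+1}\gamma_i\sigma_i\gamma_i\gamma_{i+1}$ ($1\le i\le n-1$). $TVP_n$ is the kernel of $\varphi_P:TVB_n\to S_n$, $\sigma_i,\rho_i\mapsto(i,i+1)$, $\gamma_j\mapsto e$. In $TVB_n$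 define $\lambda_{i,i+1}=\rho_i\sigma_i^{-1}$, $\lambda_{i+1,i}=\rho_i\lambda_{i,i+1}\rho_i$ ($1\le i\le n-1$), and for $1\le i<j-1\le n-1$: $\lambda_{ij}=\rho_{j-1}\cdots\rho_{i+1}\lambda_{i,i+1}\rho_{i+1}\cdots\rho_{j-1}$, $\lambda_{ji}=\rho_{j-1}\cdots\rho_{i+1}\lambda_{i+1,i}\rho_{i+1}\cdots\rho_{j-1}$. $A_n=\langle\gamma_1,\dots,\gamma_n\rangle$; $\psi_P:TVP_n\to A_n$ is the homomorphism with $\lambda_{kl}\mapsto e$, $\gamma_j\mapsto\gamma_j$; $PL_n=\ker\psi_P$. $TS_n=\langle\rho_1,\dots,\rho_{n-1},\gamma_1,\dots,\gamma_n\rangle\le TVB_n$, and $\varphi_{PT}:TVB_n\to TS_n$ is the homomorphism $\sigma_i\mapsto\rho_i$, $\rho_i\mapsto\rho_i$, $\gamma_j\mapsto\gamma_j$; $PT_n=\ker\varphi_{PT}$. *)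

theory Defs
  imports "HOL-Algebra.Algebra"
begin

datatype gen = Sg nat | Rg nat | Gg nat

type_synonym letter = "gen \<times> bool"   (* (generator, True = inverse) *)
type_synonym word = "letter list"

fun valid_gen :: "nat \<Rightarrow> gen \<Rightarrow> bool" where
  "valid_gen n (Sg i) = (1 \<le> i \<and> i \<le> n - 1)"
| "valid_gen n (Rg i) = (1 \<le> i \<and> i \<le> n - 1)"
| "valid_gen n (Gg j) = (1 \<le> j \<and> j \<le> n)"

definition valid_word :: "nat \<Rightarrow> word \<Rightarrow> bool" where
  "valid_word n w = (\<forall>x \<in> set w. valid_gen n (fst x))"

abbreviation s :: "nat \<Rightarrow> letter" where "s i \<equiv> (Sg i, False)"
abbreviation s' :: "nat \<Rightarrow> letter" where "s' i \<equiv> (Sg i, True)"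
abbreviation r :: "nat \<Rightarrow> letter" where "r i \<equiv> (Rg i, False)"
abbreviation g :: "nat \<Rightarrow> letter" where "g j \<equiv> (Gg j, False)"

definition rels :: "nat \<Rightarrow> (word \<times> word) set" where
  "rels n =
     {([s i, s (i+1), s i], [s (i+1), s i, s (i+1)]) | i. 1 \<le> i \<and> i \<le> n - 2}
   \<union> {([s i, s j], [s j, s i]) | i j. 1 \<le> i \<and> i \<le> n - 1 \<and> 1 \<le> j \<and> j \<le> n - 1 \<and> (i + 2 \<le> j \<or> j + 2 \<le> i)}
   \<union> {([r i, r i], []) | i. 1 \<le> i \<and> i \<le> n - 1}
   \<union> {([r i, r j], [r j, r i]) | i j. 1 \<le> i \<and> i \<le> n - 1 \<and> 1 \<le> j \<and> j \<le> n - 1 \<and> (i + 2 \<le> j \<or> j + 2 \<le> i)}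
   \<union> {([r i, r (i+1), r i], [r (i+1), r i, r (i+1)]) | i. 1 \<le> i \<and> i \<le> n - 2}
   \<union> {([s i, r j], [r j, s i]) | i j. 1 \<le> i \<and> i \<le> n - 1 \<and> 1 \<le> j \<and> j \<le> n - 1 \<and> (i + 2 \<le> j \<or> j + 2 \<le> i)}
   \<union> {([r i, r (i+1), s i], [s (i+1), r i, r (i+1)]) | i. 1 \<le> i \<and> i \<le> n - 2}
   \<union> {([g i, g i], []) | i. 1 \<le> i \<and> i \<le> n}
   \<union> {([g i, g j], [g j, g i]) | i j. 1 \<le> i \<and> i \<le> n \<and> 1 \<le> j \<and> j \<le> n}
   \<union> {([g j, r i], [r i, g j]) | i j. 1 \<le> i \<and> i \<le> n - 1 \<and> 1 \<le> j \<and> j \<le> n \<and> j \<noteq> i \<and> j \<noteq> i + 1}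
   \<union> {([g j, s i], [s i, g j]) | i j. 1 \<le> i \<and> i \<le> n - 1 \<and> 1 \<le> j \<and> j \<le> n \<and> j \<noteq> i \<and> j \<noteq> i + 1}
   \<union> {([r i, g i], [g (i+1), r i]) | i. 1 \<le> i \<and> i \<le> n - 1}
   \<union> {([r i, s i, r i], [g (i+1), g i, s i, g i, g (i+1)]) | i. 1 \<le> i \<and> i \<le> n - 1}"

inductive eqv :: "nat \<Rightarrow> word \<Rightarrow> word \<Rightarrow> bool" for n where
  refl: "valid_word n w \<Longrightarrow> eqv n w w"
| sym: "eqv n u v \<Longrightarrow> eqv n v u"
| trans: "eqv n u v \<Longrightarrow> eqv n v w \<Longrightarrow> eqv n u w"
| ctxt: "eqv n u v \<Longrightarrow> valid_word n a \<Longrightarrow> valid_word n b \<Longrightarrow> eqv n (a @ u @ b) (a @ v @ b)"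
| cancel: "valid_gen n x \<Longrightarrow> eqv n [(x, e), (x, \<not> e)] []"
| rel: "(l, q) \<in> rels n \<Longrightarrow> eqv n l q"

definition cls :: "nat \<Rightarrow> word \<Rightarrow> word set" where
  "cls n w = {v. eqv n v w}"

definition TVB :: "nat \<Rightarrow> word set monoid" where
  "TVB n = \<lparr> carrier = {cls n w | w. valid_word n w},
             monoid.mult = (\<lambda>A B. {w. \<exists>a \<in> A. \<exists>b \<in> B. eqv n w (a @ b)}),
             monoid.one = cls n [] \<rparr>"

definition gam :: "nat \<Rightarrow> nat \<Rightarrow> word set" where
  "gam n j = cls n [g j]"

text \<open>Words for lambda_{kl} (1-based indices, k \<noteq> l), following the definition literally.\<close>
definition lam_word :: "nat \<Rightarrow> nat \<Rightarrow> word" where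
  "lam_word k l =
    (if k < l then map r (rev [k+1..<l]) @ [r k, s' k] @ map r [k+1..<l]
     else map r (rev [l+1..<k]) @ [r l, r l, s' l, r l] @ map r [l+1..<k])"

definition lam :: "nat \<Rightarrow> nat \<Rightarrow> nat \<Rightarrow> word set" where
  "lam n k l = cls n (lam_word k l)"

fun perm_gen :: "gen \<Rightarrow> nat \<Rightarrow> nat" where
  "perm_gen (Sg i) = Transposition.transpose i (i+1)"
| "perm_gen (Rg i) = Transposition.transpose i (i+1)"
| "perm_gen (Gg j) = id"

text \<open>phi_P on words (transpositions are involutions, so inverses map the same way).\<close>
definition perm_word :: "word \<Rightarrow> nat \<Rightarrow> nat" where
  "perm_word w = foldr (\<lambda>x f. perm_gen (fst x) \<circ> f) w id"

definition TVP :: "nat \<Rightarrow> word set set" where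
  "TVP n = {c \<in> carrier (TVB n). \<exists>w \<in> c. perm_word w = id}"

fun subst_gen :: "gen \<Rightarrow> gen" where
  "subst_gen (Sg i) = Rg i"
| "subst_gen x = x"

definition phiPT_word :: "word \<Rightarrow> word" where
  "phiPT_word w = map (\<lambda>(x, e). (subst_gen x, e)) w"

definition PT :: "nat \<Rightarrow> word set set" where
  "PT n = {c \<in> carrier (TVB n). \<exists>w \<in> c. eqv n (phiPT_word w) []}"

definition A :: "nat \<Rightarrow> word set set" where
  "A n = generate (TVB n) {gam n j | j. 1 \<le> j \<and> j \<le> n}"

text \<open>The kernel of psi_P: the elements of TVP_n sent to the identity by the homomorphism
  psi_P : TVP_n \<rightarrow> A_n with lambda_{kl} \<mapsto> e, gamma_j \<mapsto> gamma_j (such a homomorphism is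
  determined on TVP_n by these conditions).\<close>
definition PL :: "nat \<Rightarrow> word set set" where
  "PL n = {x \<in> TVP n. \<forall>h.
      (h \<in> hom ((TVB n)\<lparr>carrier := TVP n\<rparr>) ((TVB n)\<lparr>carrier := A n\<rparr>)
       \<and> (\<forall>k l. 1 \<le> k \<and> k \<le> n \<and> 1 \<le> l \<and> l \<le> n \<and> k \<noteq> l \<longrightarrow> h (lam n k l) = one (TVB n))
       \<and> (\<forall>j. 1 \<le> j \<and> j \<le> n \<longrightarrow> h (gam n j) = gam n j))
      \<longrightarrow> h x = one (TVB n)}"

end

theory Submission
  imports Defs
begin


lemma valid_word_simps[simp]:
  "valid_word n [] "
  "valid_word n (x # w) = (valid_gen n (fst x) \<and> valid_word n w)"
  "valid_word n (u @ v) = (valid_word n u \<and> valid_word n v)"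
  by (auto simp: valid_word_def)

lemma rels_valid: "(l, q) \<in> rels n \<Longrightarrow> valid_word n l \<and> valid_word n q"
  unfolding rels_def by auto

lemma eqv_valid: "eqv n u v \<Longrightarrow> valid_word n u \<and> valid_word n v"
  by (induction rule: eqv.induct) (auto dest: rels_valid)

lemma eqv_validL: "eqv n u v \<Longrightarrow> valid_word n u" and eqv_validR: "eqv n u v \<Longrightarrow> valid_word n v"
  using eqv_valid by blast+

lemma eqv_app: "eqv n u u' \<Longrightarrow> eqv n v v' \<Longrightarrow> eqv n (u @ v) (u' @ v')"
proof -
  assume a: "eqv n u u'" and b: "eqv n v v'"
  have "eqv n ([] @ u @ v) ([] @ u' @ v)"
    using a b by (intro eqv.ctxt) (auto dest: eqv_valid)
  moreover have "eqv n (u' @ v @ []) (u' @ v' @ [])"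
    using a b by (intro eqv.ctxt) (auto dest: eqv_valid)
  ultimately show ?thesis by (auto intro: eqv.trans)
qed

lemma eqv_reflI: "valid_word n w \<Longrightarrow> eqv n w w" by (rule eqv.refl)

lemma eqv_appL: "eqv n u u' \<Longrightarrow> valid_word n a \<Longrightarrow> eqv n (a @ u) (a @ u')"
  by (rule eqv_app[OF eqv.refl]) 

lemma eqv_appR: "eqv n u u' \<Longrightarrow> valid_word n a \<Longrightarrow> eqv n (u @ a) (u' @ a)"
  by (rule eqv_app[OF _ eqv.refl]) 

lemma eqv_ctx: "eqv n u v \<Longrightarrow> valid_word n a \<Longrightarrow> valid_word n b \<Longrightarrow> eqv n (a @ u @ b) (a @ v @ b)"
  by (rule eqv.ctxt)

definition winv :: "word \<Rightarrow> word" where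
  "winv w = rev (map (\<lambda>(x, e). (x, \<not> e)) w)"

lemma winv_simps[simp]:
  "winv [] = []"
  "winv (x # w) = winv w @ [(fst x, \<not> snd x)]"
  "winv (u @ v) = winv v @ winv u"
  "valid_word n (winv w) = valid_word n w"
  "winv (winv w) = w"
  by (auto simp: winv_def valid_word_def case_prod_beta rev_map[symmetric] comp_def)

lemma eqv_cancel: "valid_gen n x \<Longrightarrow> eqv n [(x, e), (x, \<not> e)] []"
  by (rule eqv.cancel)

lemma eqv_winv_r: "valid_word n w \<Longrightarrow> eqv n (w @ winv w) []"
proof (induction w)
  case Nil then show ?case by (auto intro: eqv.refl)
next
  case (Cons x w)
  have "eqv n ([x] @ (w @ winv w) @ [(fst x, \<not> snd x)]) ([x] @ [] @ [(fst x, \<not> snd x)])"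
    using Cons by (intro eqv.ctxt) auto
  moreover have "eqv n [(fst x, snd x), (fst x, \<not> snd x)] []"
    using Cons by (intro eqv.cancel) auto
  ultimately show ?case by (auto intro: eqv.trans)
qed

lemma eqv_winv_l: "valid_word n w \<Longrightarrow> eqv n (winv w @ w) []"
  using eqv_winv_r[of n "winv w"] by simp

lemma cls_eq: "valid_word n a \<Longrightarrow> valid_word n b \<Longrightarrow> (cls n a = cls n b) = eqv n a b"
proof
  assume "cls n a = cls n b" "valid_word n a"
  then have "a \<in> cls n b" unfolding cls_def using eqv.refl by blast
  then show "eqv n a b" by (simp add: cls_def)
next
  assume "eqv n a b"
  then show "cls n a = cls n b" unfolding cls_def by (auto intro: eqv.trans eqv.sym)
qed

lemma mem_cls: "v \<in> cls n w \<longleftrightarrow> eqv n v w" by (simp add: cls_def)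

lemma TVB_mult: "valid_word n a \<Longrightarrow> valid_word n b \<Longrightarrow> cls n a \<otimes>\<^bsub>TVB n\<^esub> cls n b = cls n (a @ b)"
  unfolding TVB_def cls_def by (auto intro: eqv_app eqv.refl eqv.trans)

lemma TVB_one: "\<one>\<^bsub>TVB n\<^esub> = cls n []" by (simp add: TVB_def)

lemma TVB_carrier: "x \<in> carrier (TVB n) \<longleftrightarrow> (\<exists>w. valid_word n w \<and> x = cls n w)"
  by (auto simp: TVB_def)

lemma cls_carrier[simp]: "valid_word n w \<Longrightarrow> cls n w \<in> carrier (TVB n)"
  by (auto simp: TVB_carrier)

lemma TVB_group: "group (TVB n)"
proof (rule groupI)
  fix x y assume "x \<in> carrier (TVB n)" "y \<in> carrier (TVB n)"
  then show "x \<otimes>\<^bsub>TVB n\<^esub> y \<in> carrier (TVB n)" by (auto simp: TVB_carrier TVB_mult) (metis valid_word_simps(3))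
next
  show "\<one>\<^bsub>TVB n\<^esub> \<in> carrier (TVB n)" by (simp add: TVB_one)
next
  fix x y z assume "x \<in> carrier (TVB n)" "y \<in> carrier (TVB n)" "z \<in> carrier (TVB n)"
  then show "x \<otimes>\<^bsub>TVB n\<^esub> y \<otimes>\<^bsub>TVB n\<^esub> z = x \<otimes>\<^bsub>TVB n\<^esub> (y \<otimes>\<^bsub>TVB n\<^esub> z)"
    by (auto simp: TVB_carrier TVB_mult)
next
  fix x assume "x \<in> carrier (TVB n)"
  then show "\<one>\<^bsub>TVB n\<^esub> \<otimes>\<^bsub>TVB n\<^esub> x = x" by (auto simp: TVB_carrier TVB_mult TVB_one)
next
  fix x assume "x \<in> carrier (TVB n)"
  then obtain w where w: "valid_word n w" "x = cls n w" by (auto simp: TVB_carrier)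
  then have "cls n (winv w) \<otimes>\<^bsub>TVB n\<^esub> x = \<one>\<^bsub>TVB n\<^esub>"
    by (simp add: TVB_mult TVB_one cls_eq eqv_winv_l)
  then show "\<exists>y\<in>carrier (TVB n). y \<otimes>\<^bsub>TVB n\<^esub> x = \<one>\<^bsub>TVB n\<^esub>" using w by force
qed

lemma TVB_inv: "valid_word n w \<Longrightarrow> inv\<^bsub>TVB n\<^esub> (cls n w) = cls n (winv w)"
proof -
  assume w: "valid_word n w"
  have "cls n (winv w) \<otimes>\<^bsub>TVB n\<^esub> cls n w = \<one>\<^bsub>TVB n\<^esub>"
    using w by (simp add: TVB_mult TVB_one cls_eq eqv_winv_l)
  moreover have "cls n w \<otimes>\<^bsub>TVB n\<^esub> cls n (winv w) = \<one>\<^bsub>TVB n\<^esub>"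
    using w by (simp add: TVB_mult TVB_one cls_eq eqv_winv_r)
  ultimately show ?thesis using w group.inv_equality[OF TVB_group] by simp
qed


lemmas [trans] = eqv.trans

lemma step: "y = a @ q @ b \<Longrightarrow> eqv n l q \<Longrightarrow> x = a @ l @ b \<Longrightarrow> valid_word n a \<Longrightarrow> valid_word n b \<Longrightarrow> eqv n x y"
  using eqv.ctxt by blast

lemma stepS: "x = a @ l @ b \<Longrightarrow> eqv n l q \<Longrightarrow> y = a @ q @ b \<Longrightarrow> valid_word n a \<Longrightarrow> valid_word n b \<Longrightarrow> eqv n y x"
  using eqv.ctxt eqv.sym by blast

lemma eqv_eq: "x = y \<Longrightarrow> valid_word n x \<Longrightarrow> eqv n x y"
  using eqv.refl by blast

lemma relI: "(l, q) \<in> rels n \<Longrightarrow> eqv n l q" by (rule eqv.rel)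

lemma rel_sbraid: "1 \<le> i \<Longrightarrow> i + 1 < n \<Longrightarrow> eqv n [s i, s (i+1), s i] [s (i+1), s i, s (i+1)]"
  by (rule relI) (auto simp: rels_def)
lemma rel_scomm: "1 \<le> i \<Longrightarrow> i < n \<Longrightarrow> 1 \<le> j \<Longrightarrow> j < n \<Longrightarrow> i + 2 \<le> j \<or> j + 2 \<le> i \<Longrightarrow> eqv n [s i, s j] [s j, s i]"
  by (rule relI) (auto simp: rels_def)
lemma rel_rr: "1 \<le> i \<Longrightarrow> i < n \<Longrightarrow> eqv n [r i, r i] []"
  by (rule relI) (auto simp: rels_def)
lemma rel_rcomm: "1 \<le> i \<Longrightarrow> i < n \<Longrightarrow> 1 \<le> j \<Longrightarrow> j < n \<Longrightarrow> i + 2 \<le> j \<or> j + 2 \<le> i \<Longrightarrow> eqv n [r i, r j] [r j, r i]"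
  by (rule relI) (auto simp: rels_def)
lemma rel_rbraid: "1 \<le> i \<Longrightarrow> i + 1 < n \<Longrightarrow> eqv n [r i, r (i+1), r i] [r (i+1), r i, r (i+1)]"
  by (rule relI) (auto simp: rels_def)
lemma rel_srcomm: "1 \<le> i \<Longrightarrow> i < n \<Longrightarrow> 1 \<le> j \<Longrightarrow> j < n \<Longrightarrow> i + 2 \<le> j \<or> j + 2 \<le> i \<Longrightarrow> eqv n [s i, r j] [r j, s i]"
  by (rule relI) (auto simp: rels_def)
lemma rel_mixed: "1 \<le> i \<Longrightarrow> i + 1 < n \<Longrightarrow> eqv n [r i, r (i+1), s i] [s (i+1), r i, r (i+1)]"
  by (rule relI) (auto simp: rels_def)
lemma rel_gg: "1 \<le> i \<Longrightarrow> i \<le> n \<Longrightarrow> eqv n [g i, g i] []"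
  by (rule relI) (auto simp: rels_def)
lemma rel_gcomm: "1 \<le> i \<Longrightarrow> i \<le> n \<Longrightarrow> 1 \<le> j \<Longrightarrow> j \<le> n \<Longrightarrow> eqv n [g i, g j] [g j, g i]"
  by (rule relI) (auto simp: rels_def)
lemma rel_gr: "1 \<le> i \<Longrightarrow> i < n \<Longrightarrow> 1 \<le> j \<Longrightarrow> j \<le> n \<Longrightarrow> j \<noteq> i \<Longrightarrow> j \<noteq> i + 1 \<Longrightarrow> eqv n [g j, r i] [r i, g j]"
  by (rule relI) (auto simp: rels_def)
lemma rel_gs: "1 \<le> i \<Longrightarrow> i < n \<Longrightarrow> 1 \<le> j \<Longrightarrow> j \<le> n \<Longrightarrow> j \<noteq> i \<Longrightarrow> j \<noteq> i + 1 \<Longrightarrow> eqv n [g j, s i] [s i, g j]"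
  by (rule relI) (auto simp: rels_def)
lemma rel_rg: "1 \<le> i \<Longrightarrow> i < n \<Longrightarrow> eqv n [r i, g i] [g (i+1), r i]"
  by (rule relI) (auto simp: rels_def)
lemma rel_twist: "1 \<le> i \<Longrightarrow> i < n \<Longrightarrow> eqv n [r i, s i, r i] [g (i+1), g i, s i, g i, g (i+1)]"
  by (rule relI) (auto simp: rels_def)

lemma eqv_sym: "eqv n u v \<Longrightarrow> eqv n v u" by (rule eqv.sym)

lemma perm_word_Nil[simp]: "perm_word [] = id" by (simp add: perm_word_def)
lemma perm_word_Cons[simp]: "perm_word (x # w) = perm_gen (fst x) \<circ> perm_word w" by (simp add: perm_word_def)
lemma perm_word_append[simp]: "perm_word (u @ v) = perm_word u \<circ> perm_word v"
  by (induction u) auto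

lemma perm_gen_invol[simp]: "perm_gen x (perm_gen x k) = k"
  by (cases x) (auto simp: transpose_def)

lemma perm_rel: "(l, q) \<in> rels n \<Longrightarrow> perm_word l = perm_word q"
  unfolding rels_def by (auto simp: fun_eq_iff transpose_def)

lemma perm_eqv: "eqv n u v \<Longrightarrow> perm_word u = perm_word v"
  by (induction rule: eqv.induct) (auto simp: fun_eq_iff perm_rel)

lemma perm_winv: "perm_word (winv w) (perm_word w k) = k"
  by (induction w arbitrary: k) auto

lemma perm_winv2: "perm_word w (perm_word (winv w) k) = k"
  using perm_winv[of "winv w"] by simp

lemma phiPT_Nil[simp]: "phiPT_word [] = []" by (simp add: phiPT_word_def)
lemma phiPT_Cons[simp]: "phiPT_word (x # w) = (subst_gen (fst x), snd x) # phiPT_word w"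
  by (simp add: phiPT_word_def case_prod_beta)
lemma phiPT_append[simp]: "phiPT_word (u @ v) = phiPT_word u @ phiPT_word v"
  by (simp add: phiPT_word_def)
lemma perm_gen_subst[simp]: "perm_gen (subst_gen x) = perm_gen x" by (cases x) auto
lemma valid_subst[simp]: "valid_gen n (subst_gen x) = valid_gen n x" by (cases x) auto
lemma perm_phiPT[simp]: "perm_word (phiPT_word w) = perm_word w" by (induction w) auto
lemma valid_phiPT[simp]: "valid_word n (phiPT_word w) = valid_word n w" by (induction w) auto

lemma rg2: "1 \<le> i \<Longrightarrow> i < n \<Longrightarrow> eqv n [r i, g (i+1)] [g i, r i]"
proof -
  assume i: "1 \<le> i" "i < n"
  have "eqv n [r i, g (i+1)] ([r i, g (i+1)] @ [r i, r i] @ [])"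
    by (rule stepS[OF HOL.refl], rule rel_rr) (use i in auto)
  also have "eqv n ... ([r i] @ [r i, g i] @ [r i])"
    by (rule step[OF HOL.refl], rule eqv_sym[OF rel_rg]) (use i in auto)
  also have "eqv n ... ([] @ [r i, r i] @ [g i, r i])"
    by (rule eqv_eq) (use i in auto)
  also have "eqv n ... ([] @ [] @ [g i, r i])"
    by (rule step[OF HOL.refl], rule rel_rr) (use i in auto)
  finally show ?thesis by simp
qed

lemma twist_image: "1 \<le> i \<Longrightarrow> i < n \<Longrightarrow> eqv n [r i, r i, r i] [g (i+1), g i, r i, g i, g (i+1)]"
proof -
  assume i: "1 \<le> i" "i < n"
  have "eqv n [g (i+1), g i, r i, g i, g (i+1)] ([g (i+1), g i] @ [g (i+1), r i] @ [g (i+1)])"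
    by (rule step[OF HOL.refl], rule rel_rg) (use i in auto)
  also have "eqv n ... ([g (i+1)] @ [g (i+1), g i] @ [r i, g (i+1)])"
    by (rule step[OF HOL.refl], rule rel_gcomm[of i n "i+1"]) (use i in auto)
  also have "eqv n ... ([g (i+1), g (i+1), g i] @ [g i, r i] @ [])"
    by (rule step[OF HOL.refl], rule rg2[of i n]) (use i in auto)
  also have "eqv n ... ([] @ [g (i+1), g (i+1)] @ [g i, g i, r i])"
    by (rule eqv_eq) (use i in auto)
  also have "eqv n ... ([] @ [] @ [g i, g i, r i])"
    by (rule step[OF HOL.refl], rule rel_gg) (use i in auto)
  also have "eqv n ... ([] @ [g i, g i] @ [r i])"
    by (rule eqv_eq) (use i in auto)
  also have "eqv n ... ([] @ [] @ [r i])"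
    by (rule step[OF HOL.refl], rule rel_gg) (use i in auto)
  finally have 2: "eqv n [g (i+1), g i, r i, g i, g (i+1)] [r i]" by simp
  have "eqv n [r i, r i, r i] ([] @ [] @ [r i])"
    by (rule step[OF HOL.refl], rule rel_rr) (use i in auto)
  then show ?thesis using 2 by (auto intro: eqv.trans eqv.sym)
qed

lemma phiPT_rel: "(l, q) \<in> rels n \<Longrightarrow> eqv n (phiPT_word l) (phiPT_word q)"
  unfolding rels_def
  by (elim UnE; clarsimp; (rule rel_rbraid[simplified] rel_rcomm rel_rr rel_gg rel_gcomm rel_gr rel_rg[simplified] twist_image[simplified] eqv_eq)?; simp?; arith?)

lemma phiPT_eqv: "eqv n u v \<Longrightarrow> eqv n (phiPT_word u) (phiPT_word v)"
proof (induction rule: eqv.induct)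
  case (refl w) then show ?case by (simp add: eqv.refl)
next
  case (sym u v) then show ?case by (blast intro: eqv.sym)
next
  case (trans u v w) then show ?case by (blast intro: eqv.trans)
next
  case (ctxt u v a b) then show ?case by (simp add: eqv.ctxt)
next
  case (cancel x e) then show ?case by (simp add: eqv.cancel)
next
  case (rel l q) then show ?case by (rule phiPT_rel)
qed


lemma valid_gen_simps[simp]:
  "valid_gen n (Rg i) = (1 \<le> i \<and> i < n)"
  "valid_gen n (Sg i) = (1 \<le> i \<and> i < n)"
  by auto

definition validR :: "nat \<Rightarrow> nat list \<Rightarrow> bool" where
  "validR n R = (\<forall>i\<in>set R. 1 \<le> i \<and> i < n)"

lemma valid_map_r[simp]: "valid_word n (map r R) = validR n R"
  by (induction R) (auto simp: validR_def)

lemma valid_map_g[simp]: "valid_word n (map g R) = (\<forall>j\<in>set R. 1 \<le> j \<and> j \<le> n)"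
  by (induction R) auto

lemma validR_simps[simp]: "validR n []" "validR n (a # R) = (1 \<le> a \<and> a < n \<and> validR n R)"
  "validR n (R @ S) = (validR n R \<and> validR n S)"
  by (auto simp: validR_def)

lemma r_inv: "1 \<le> i \<Longrightarrow> i < n \<Longrightarrow> eqv n [(Rg i, True)] [r i]"
proof -
  assume i: "1 \<le> i" "i < n"
  have "eqv n [(Rg i, True)] ([(Rg i, True)] @ [r i, r i] @ [])"
    by (rule stepS[OF HOL.refl], rule rel_rr) (use i in auto)
  also have "eqv n ... ([] @ [] @ [r i])"
    by (rule step[OF HOL.refl], rule eqv.cancel[where e=True, simplified]) (use i in auto)
  finally show ?thesis by simp
qed

lemma g_inv: "1 \<le> i \<Longrightarrow> i \<le> n \<Longrightarrow> eqv n [(Gg i, True)] [g i]"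
proof -
  assume i: "1 \<le> i" "i \<le> n"
  have "eqv n [(Gg i, True)] ([(Gg i, True)] @ [g i, g i] @ [])"
    by (rule stepS[OF HOL.refl], rule rel_gg) (use i in auto)
  also have "eqv n ... ([] @ [] @ [g i])"
    by (rule step[OF HOL.refl], rule eqv.cancel[where e=True, simplified]) (use i in auto)
  finally show ?thesis by simp
qed

lemma rho_gamma: "1 \<le> i \<Longrightarrow> i < n \<Longrightarrow> 1 \<le> j \<Longrightarrow> j \<le> n \<Longrightarrow>
  eqv n [r i, g j] [g (Transposition.transpose i (i+1) j), r i]"
proof -
  assume a: "1 \<le> i" "i < n" "1 \<le> j" "j \<le> n"
  show ?thesis
  proof (cases "j = i")
    case True then show ?thesis using rel_rg a by simp
  next
    case False
    show ?thesis
    proof (cases "j = i + 1")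
      case True then show ?thesis using rg2 a by simp
    next
      case False2: False
      then show ?thesis using False a rel_gr[of i n j] by (simp add: eqv_sym)
    qed
  qed
qed

lemma perm_range: "validR n R \<Longrightarrow> 1 \<le> j \<Longrightarrow> j \<le> n \<Longrightarrow>
   1 \<le> perm_word (map r R) j \<and> perm_word (map r R) j \<le> n"
  by (induction R) (auto simp: transpose_def)

lemma R_gamma: "validR n R \<Longrightarrow> 1 \<le> j \<Longrightarrow> j \<le> n \<Longrightarrow>
  eqv n (map r R @ [g j]) (g (perm_word (map r R) j) # map r R)"
proof (induction R)
  case Nil then show ?case by (auto intro: eqv.refl)
next
  case (Cons a R)
  let ?j = "perm_word (map r R) j"
  have j: "1 \<le> ?j" "?j \<le> n" using perm_range Cons by auto
  have "eqv n (map r (a # R) @ [g j]) ([r a] @ (map r R @ [g j]) @ [])" by (rule eqv_eq) (use Cons in auto)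
  also have "eqv n ... ([r a] @ (g ?j # map r R) @ [])"
    by (rule eqv.ctxt) (use Cons in auto)
  also have "eqv n ... ([] @ [r a, g ?j] @ map r R)" by (rule eqv_eq) (use Cons j in auto)
  also have "eqv n ... ([] @ [g (Transposition.transpose a (a+1) ?j), r a] @ map r R)"
    by (rule step[OF HOL.refl], rule rho_gamma) (use Cons j in auto)
  finally show ?case by simp
qed

definition ts :: "word \<Rightarrow> bool" where
  "ts w = (\<forall>x\<in>set w. \<forall>i. fst x \<noteq> Sg i)"

lemma ts_simps[simp]: "ts []" "ts (x # w) = ((\<forall>i. fst x \<noteq> Sg i) \<and> ts w)" "ts (u @ v) = (ts u \<and> ts v)"
  by (auto simp: ts_def)

lemma ts_phiPT[simp]: "ts (phiPT_word w)"
proof (induction w)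
  case (Cons x w) then show ?case by (cases "fst x") auto
qed simp

lemma ts_decomp: "ts w \<Longrightarrow> valid_word n w \<Longrightarrow>
  \<exists>js R. (\<forall>j\<in>set js. 1 \<le> j \<and> j \<le> n) \<and> validR n R \<and> eqv n w (map g js @ map r R)"
proof (induction w rule: rev_induct)
  case Nil then show ?case by (auto intro!: exI[of _ "[]"] eqv.refl)
next
  case (snoc x w)
  then obtain js R where jR: "\<forall>j\<in>set js. 1 \<le> j \<and> j \<le> n" "validR n R" "eqv n w (map g js @ map r R)"
    by auto
  obtain y e where x: "x = (y, e)" by fastforce
  show ?case
  proof (cases y)
    case (Sg i) then show ?thesis using snoc x by simp
  next
    case (Rg i)
    then have i: "1 \<le> i" "i < n" using snoc x by auto
    have "eqv n (w @ [x]) ((map g js @ map r R) @ [r i])"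
    proof (cases e)
      case True
      then show ?thesis using x Rg eqv_app[OF jR(3) r_inv[OF i]] by simp
    next
      case False
      then show ?thesis using x Rg eqv_appR[OF jR(3), of "[r i]"] i by simp
    qed
    then show ?thesis using jR i by (intro exI[of _ js] exI[of _ "R @ [i]"]) auto
  next
    case (Gg j)
    then have j: "1 \<le> j" "j \<le> n" using snoc x by auto
    have "eqv n (w @ [x]) ((map g js @ map r R) @ [g j])"
    proof (cases e)
      case True
      then show ?thesis using x Gg eqv_app[OF jR(3) g_inv[OF j]] by simp
    next
      case False
      then show ?thesis using x Gg eqv_appR[OF jR(3), of "[g j]"] j by simp
    qed
    also have "eqv n ... (map g js @ (map r R @ [g j]))" by (rule eqv_eq) (use jR j in auto)
    also have "eqv n ... (map g js @ (g (perm_word (map r R) j) # map r R))"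
      by (rule eqv_appL[OF R_gamma]) (use jR j in auto)
    finally show ?thesis using jR j perm_range[of n R j]
      by (intro exI[of _ "js @ [perm_word (map r R) j]"] exI[of _ R]) auto
  qed
qed


lemma r_commute: "validR n c \<Longrightarrow> 1 \<le> a \<Longrightarrow> a < n \<Longrightarrow> \<forall>x\<in>set c. a + 2 \<le> x \<or> x + 2 \<le> a \<Longrightarrow>
  eqv n (map r c @ [r a]) (r a # map r c)"
proof (induction c)
  case Nil then show ?case by (auto intro: eqv.refl)
next
  case (Cons x c)
  have "eqv n (map r (x # c) @ [r a]) ([r x] @ (map r c @ [r a]) @ [])" by (rule eqv_eq) (use Cons in auto)
  also have "eqv n ... ([r x] @ (r a # map r c) @ [])" by (rule eqv.ctxt) (use Cons in auto)
  also have "eqv n ... ([] @ [r x, r a] @ map r c)" by (rule eqv_eq) (use Cons in auto)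
  also have "eqv n ... ([] @ [r a, r x] @ map r c)" by (rule step[OF HOL.refl], rule rel_rcomm) (use Cons in auto)
  finally show ?case by simp
qed

lemma rev_upt_Suc: "j < m \<Longrightarrow> rev [j..<m] = rev [Suc j..<m] @ [j]"
  by (simp add: upt_rec)

lemma seg_step: "m \<le> n \<Longrightarrow> 1 \<le> j \<Longrightarrow> j \<le> m \<Longrightarrow> 1 \<le> a \<Longrightarrow> a < m \<Longrightarrow>
  \<exists>u j'. (\<forall>i\<in>set u. 1 \<le> i \<and> i + 1 < m) \<and> 1 \<le> j' \<and> j' \<le> m \<and>
     eqv n (map r (rev [j..<m]) @ [r a]) (map r u @ map r (rev [j'..<m]))"
proof -
  assume mn: "m \<le> n" and j: "1 \<le> j" "j \<le> m" and a: "1 \<le> a" "a < m"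
  have vc: "validR n (rev [j'..<m])" if "1 \<le> j'" for j' using that mn by (auto simp: validR_def)
  show ?thesis
  proof (cases "j = m")
    case True
    show ?thesis
    proof (cases "a + 1 < m")
      case True
      then show ?thesis using \<open>j = m\<close> a mn
        by (intro exI[of _ "[a]"] exI[of _ m]) (auto intro: eqv.refl)
    next
      case False
      then have "a = m - 1" using a by auto
      then have "rev [a..<m] = [a]" using a by (simp add: upt_rec)
      then show ?thesis using \<open>j = m\<close> a mn
        by (intro exI[of _ "[]"] exI[of _ a]) (auto intro: eqv.refl)
    qed
  next
    case False
    then have jm: "j < m" using j by auto
    consider "a + 1 = j" | "a = j" | "a + 1 < j" | "j < a" by linarith
    then show ?thesis
    proof cases
      case 1
      then have "rev [a..<m] = rev [j..<m] @ [a]" using jm by (simp add: upt_rec)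
      then show ?thesis using 1 a mn j
        by (intro exI[of _ "[]"] exI[of _ a]) (auto intro!: eqv.refl simp: validR_def)
    next
      case 2
      have "eqv n (map r (rev [j..<m]) @ [r a]) (map r (rev [Suc j..<m]) @ [r j, r j] @ [])"
        using 2 jm j mn by (intro eqv_eq) (auto simp: rev_upt_Suc vc)
      also have "eqv n ... (map r (rev [Suc j..<m]) @ [] @ [])"
        by (rule eqv.ctxt[OF rel_rr]) (use j jm mn vc in auto)
      finally show ?thesis using jm j
        by (intro exI[of _ "[]"] exI[of _ "Suc j"]) auto
    next
      case 3
      have "eqv n (map r (rev [j..<m]) @ [r a]) (r a # map r (rev [j..<m]))"
        by (rule r_commute) (use 3 vc j a mn in auto)
      then show ?thesis using 3 j jm a
        by (intro exI[of _ "[a]"] exI[of _ j]) auto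
    next
      case 4
      define A where "A = rev [a+1..<m]"
      define B where "B = rev [j..<a-1]"
      have c: "rev [j..<m] = A @ [a, a-1] @ B"
      proof -
        have "[j..<m] = [j..<a-1] @ [a-1..<m]" using upt_add_eq_append[of j "a-1" "m-(a-1)"] 4 a by simp
        moreover have "[a-1..<m] = [a-1, a] @ [a+1..<m]" using 4 a j by (simp add: upt_rec)
        ultimately show ?thesis by (simp add: A_def B_def)
      qed
      have vA: "validR n A" and vB: "validR n B" using 4 j a mn by (auto simp: A_def B_def validR_def)
      have "eqv n (map r (rev [j..<m]) @ [r a]) ((map r A @ [r a, r (a-1)]) @ (map r B @ [r a]) @ [])"
        by (rule eqv_eq) (use c vA vB a mn 4 j in auto)
      also have "eqv n ... ((map r A @ [r a, r (a-1)]) @ (r a # map r B) @ [])"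
        by (rule eqv.ctxt[OF r_commute]) (use vA vB a mn 4 j in \<open>auto simp: B_def\<close>)
      also have "eqv n ... (map r A @ [r (a-1+1), r (a-1), r (a-1+1)] @ map r B)"
        by (rule eqv_eq) (use vA vB a mn 4 j in auto)
      also have "eqv n ... (map r A @ [r (a-1), r (a-1+1), r (a-1)] @ map r B)"
        by (rule eqv.ctxt[OF eqv_sym[OF rel_rbraid]]) (use vA vB a mn 4 j in auto)
      also have "eqv n ... ((map r A @ [r (a-1)]) @ map r [a, a-1] @ map r B)"
        by (rule eqv_eq) (use vA vB a mn 4 j in auto)
      also have "eqv n ... ((r (a-1) # map r A) @ map r [a, a-1] @ map r B)"
        by (rule eqv_appR[OF r_commute]) (use vA vB a mn 4 j in \<open>auto simp: A_def\<close>)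
      finally show ?thesis using c 4 j a
        by (intro exI[of _ "[a-1]"] exI[of _ j]) auto
    qed
  qed
qed

lemma decomp: "m \<le> n \<Longrightarrow> 1 \<le> m \<Longrightarrow> (\<forall>i\<in>set R. 1 \<le> i \<and> i < m) \<Longrightarrow>
  \<exists>v j. (\<forall>i\<in>set v. 1 \<le> i \<and> i + 1 < m) \<and> 1 \<le> j \<and> j \<le> m \<and>
     eqv n (map r R) (map r v @ map r (rev [j..<m]))"
proof (induction R rule: rev_induct)
  case Nil then show ?case by (intro exI[of _ "[]"] exI[of _ m]) (auto intro: eqv.refl)
next
  case (snoc a R)
  then obtain v j where vj: "\<forall>i\<in>set v. 1 \<le> i \<and> i + 1 < m" "1 \<le> j" "j \<le> m"
     "eqv n (map r R) (map r v @ map r (rev [j..<m]))" by auto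
  have a: "1 \<le> a" "a < m" using snoc by auto
  obtain u j' where uj: "\<forall>i\<in>set u. 1 \<le> i \<and> i + 1 < m" "1 \<le> j'" "j' \<le> m"
     "eqv n (map r (rev [j..<m]) @ [r a]) (map r u @ map r (rev [j'..<m]))"
    using seg_step[OF snoc(2) vj(2,3) a] by blast
  have "eqv n (map r (R @ [a])) ((map r v @ map r (rev [j..<m])) @ [r a])"
    using eqv_appR[OF vj(4), of "[r a]"] a snoc(2) by simp
  also have "eqv n ... (map r v @ (map r (rev [j..<m]) @ [r a]))" by (rule eqv_eq) (use vj a snoc(2) in \<open>auto simp: validR_def\<close>)
  also have "eqv n ... (map r v @ (map r u @ map r (rev [j'..<m])))"
    by (rule eqv_appL[OF uj(4)]) (use vj snoc(2) in \<open>auto simp: validR_def\<close>)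
  finally show ?case using vj uj by (intro exI[of _ "v @ u"] exI[of _ j']) auto
qed

lemma perm_fix: "\<forall>i\<in>set R. k \<noteq> i \<and> k \<noteq> i + 1 \<Longrightarrow> perm_word (map r R) k = k"
  by (induction R) auto

lemma perm_inj: "perm_word w x = perm_word w y \<Longrightarrow> x = y"
  by (metis perm_winv)

lemma coxeter: "m \<le> n \<Longrightarrow> (\<forall>i\<in>set R. 1 \<le> i \<and> i < m) \<Longrightarrow> perm_word (map r R) = id \<Longrightarrow> eqv n (map r R) []"
proof (induction m arbitrary: R)
  case 0 then have "R = []" by (cases R) auto
  then show ?case by (auto intro: eqv.refl)
next
  case (Suc m)
  show ?case
  proof (cases "m = 0")
    case True
    then have "R = []" using Suc.prems by (cases R) auto
    then show ?thesis by (auto intro: eqv.refl)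
  next
    case False
    obtain v j where vj: "\<forall>i\<in>set v. 1 \<le> i \<and> i + 1 < Suc m" "1 \<le> j" "j \<le> Suc m"
      "eqv n (map r R) (map r v @ map r (rev [j..<Suc m]))"
      using decomp[OF Suc.prems(1) _ Suc.prems(2)] by auto
    have pv: "perm_word (map r v) \<circ> perm_word (map r (rev [j..<Suc m])) = id"
    proof -
      have "perm_word (map r R) = perm_word (map r v) \<circ> perm_word (map r (rev [j..<Suc m]))"
        using perm_eqv[OF vj(4)] by (simp only: map_append perm_word_append)
      then show ?thesis using Suc.prems(3) by metis
    qed
    have j: "j = Suc m"
    proof (rule ccontr)
      assume "j \<noteq> Suc m"
      then have jm: "j \<le> m" using vj by auto
      have "rev [j..<Suc m] = m # rev [j..<m]" using jm by simp
      then have 1: "perm_word (map r (rev [j..<Suc m])) (Suc m) = m"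
        using perm_fix[of "rev [j..<m]" "Suc m"] by simp
      have 2: "perm_word (map r v) (Suc m) = Suc m" using vj(1) by (intro perm_fix) fastforce
      have "perm_word (map r v) m = Suc m" using pv 1 by (metis comp_apply id_apply)
      then show False using 2 perm_inj[of "map r v" m "Suc m"] by simp
    qed
    then have "perm_word (map r v) = (\<lambda>a. a)" using pv by (simp add: comp_def id_def)
    moreover have "\<forall>i\<in>set v. 1 \<le> i \<and> i < m" using vj by auto
    ultimately have "eqv n (map r v) []" using Suc.IH Suc.prems(1) by auto
    then show ?thesis using vj(4) j by (auto intro: eqv.trans)
  qed
qed


lemma perm_map_g[simp]: "perm_word (map g js) = id"
  by (induction js) auto

lemma TS_trivial: "ts w \<Longrightarrow> valid_word n w \<Longrightarrow> perm_word w = id \<Longrightarrow>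
  \<exists>js. (\<forall>j\<in>set js. 1 \<le> j \<and> j \<le> n) \<and> eqv n w (map g js)"
proof -
  assume a: "ts w" "valid_word n w" "perm_word w = id"
  obtain js R where jR: "\<forall>j\<in>set js. 1 \<le> j \<and> j \<le> n" "validR n R" "eqv n w (map g js @ map r R)"
    using ts_decomp[OF a(1,2)] by blast
  have "perm_word (map r R) = id" using perm_eqv[OF jR(3)] a(3) by simp
  then have "eqv n (map r R) []" using coxeter[of n n R] jR(2) by (simp add: validR_def)
  then have "eqv n (map g js @ map r R) (map g js @ [])" using jR(1) by (intro eqv_appL) auto
  then show ?thesis using jR by (intro exI[of _ js]) (auto intro: eqv.trans)
qed

lemma gword_in_A: "\<forall>j\<in>set js. 1 \<le> j \<and> j \<le> n \<Longrightarrow> cls n (map g js) \<in> A n"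
proof (induction js)
  case Nil
  have "\<one>\<^bsub>TVB n\<^esub> \<in> A n" unfolding A_def by (rule generate.one)
  then show ?case by (simp add: TVB_one)
next
  case (Cons j js)
  have "gam n j \<in> A n" unfolding A_def using Cons by (intro generate.incl) auto
  moreover have "cls n (map g js) \<in> A n" using Cons by auto
  ultimately have "gam n j \<otimes>\<^bsub>TVB n\<^esub> cls n (map g js) \<in> A n" unfolding A_def by (rule generate.eng)
  moreover have "gam n j \<otimes>\<^bsub>TVB n\<^esub> cls n (map g js) = cls n (map g (j # js))"
    unfolding gam_def using Cons by (subst TVB_mult) auto
  ultimately show ?case by simp
qed

definition h0 :: "nat \<Rightarrow> word set \<Rightarrow> word set" where
  "h0 n c = cls n (phiPT_word (SOME w. w \<in> c))"

lemma h0_cls: "valid_word n w \<Longrightarrow> h0 n (cls n w) = cls n (phiPT_word w)"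
proof -
  assume w: "valid_word n w"
  have "w \<in> cls n w" using w by (simp add: mem_cls eqv.refl)
  then have "(SOME w'. w' \<in> cls n w) \<in> cls n w" by (rule someI)
  then have e: "eqv n (SOME w'. w' \<in> cls n w) w" by (simp add: mem_cls)
  then have "eqv n (phiPT_word (SOME w'. w' \<in> cls n w)) (phiPT_word w)" by (rule phiPT_eqv)
  then show ?thesis unfolding h0_def using cls_eq eqv_valid by blast
qed

lemma carrier_elim: "c \<in> carrier (TVB n) \<Longrightarrow> w \<in> c \<Longrightarrow> valid_word n w \<and> c = cls n w"
proof -
  assume c: "c \<in> carrier (TVB n)" "w \<in> c"
  then obtain w0 where w0: "valid_word n w0" "c = cls n w0" by (auto simp: TVB_carrier)
  then have "eqv n w w0" using c by (simp add: mem_cls)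
  then show ?thesis using w0 cls_eq eqv_valid by metis
qed

lemma TVP_elim: "c \<in> TVP n \<Longrightarrow> \<exists>w. valid_word n w \<and> c = cls n w \<and> perm_word w = id"
  unfolding TVP_def using carrier_elim by blast

lemma TVP_intro: "valid_word n w \<Longrightarrow> perm_word w = id \<Longrightarrow> cls n w \<in> TVP n"
  unfolding TVP_def by (auto simp: mem_cls intro!: bexI[of _ w] eqv.refl)

lemma h0_TVP: "c \<in> TVP n \<Longrightarrow> h0 n c \<in> A n"
proof -
  assume "c \<in> TVP n"
  then obtain w where w: "valid_word n w" "c = cls n w" "perm_word w = id" using TVP_elim by blast
  obtain js where js: "\<forall>j\<in>set js. 1 \<le> j \<and> j \<le> n" "eqv n (phiPT_word w) (map g js)"
    using TS_trivial[of "phiPT_word w" n] w by auto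
  have "h0 n c = cls n (map g js)" using w js cls_eq eqv_valid h0_cls by metis
  then show ?thesis using gword_in_A js by simp
qed

lemma h0_hom: "h0 n \<in> hom ((TVB n)\<lparr>carrier := TVP n\<rparr>) ((TVB n)\<lparr>carrier := A n\<rparr>)"
  unfolding hom_def using h0_TVP by (auto simp: TVB_mult h0_cls dest!: TVP_elim)

lemma validR_rev[simp]: "validR n (rev xs) = validR n xs" by (simp add: validR_def)

lemma rev_cancel: "validR n Xs \<Longrightarrow> eqv n (map r (rev Xs) @ map r Xs) []"
proof (induction Xs)
  case Nil then show ?case by (simp add: eqv.refl)
next
  case (Cons x Xs)
  have "eqv n (map r (rev (x # Xs)) @ map r (x # Xs)) (map r (rev Xs) @ [r x, r x] @ map r Xs)"
    by (rule eqv_eq) (use Cons in auto)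
  also have "eqv n ... (map r (rev Xs) @ [] @ map r Xs)"
    by (rule eqv.ctxt[OF rel_rr]) (use Cons in auto)
  finally show ?case using Cons by (auto intro: eqv.trans)
qed

lemma lam_valid: "1 \<le> k \<Longrightarrow> k \<le> n \<Longrightarrow> 1 \<le> l \<Longrightarrow> l \<le> n \<Longrightarrow> k \<noteq> l \<Longrightarrow> valid_word n (lam_word k l)"
  by (auto simp: lam_word_def valid_word_def)

lemma phiPT_lam: "1 \<le> k \<Longrightarrow> k \<le> n \<Longrightarrow> 1 \<le> l \<Longrightarrow> l \<le> n \<Longrightarrow> k \<noteq> l \<Longrightarrow> eqv n (phiPT_word (lam_word k l)) []"
proof -
  assume a: "1 \<le> k" "k \<le> n" "1 \<le> l" "l \<le> n" "k \<noteq> l"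
  show ?thesis
  proof (cases "k < l")
    case True
    define Xs where "Xs = [k+1..<l]"
    have vX: "validR n Xs" using a True by (auto simp: Xs_def validR_def)
    have "eqv n (phiPT_word (lam_word k l)) (map r (rev Xs) @ [r k, (Rg k, True)] @ map r Xs)"
      using True a by (intro eqv_eq) (auto simp: lam_word_def Xs_def phiPT_word_def valid_word_def)
    also have "eqv n ... (map r (rev Xs) @ [] @ map r Xs)"
      by (rule eqv.ctxt[OF eqv.cancel[where e=False, simplified]]) (use a True vX in auto)
    also have "eqv n ... []" using rev_cancel[OF vX] by simp
    finally show ?thesis .
  next
    case False
    define Xs where "Xs = [l+1..<k]"
    have vX: "validR n Xs" using a False by (auto simp: Xs_def validR_def)
    have "eqv n (phiPT_word (lam_word k l)) (map r (rev Xs) @ [r l, r l] @ ([(Rg l, True), r l] @ map r Xs))"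
      using False a by (intro eqv_eq) (auto simp: lam_word_def Xs_def phiPT_word_def valid_word_def)
    also have "eqv n ... (map r (rev Xs) @ [] @ ([(Rg l, True), r l] @ map r Xs))"
      by (rule eqv.ctxt[OF rel_rr]) (use a False vX in auto)
    also have "eqv n ... (map r (rev Xs) @ [(Rg l, True), r l] @ map r Xs)" by (rule eqv_eq) (use a False vX in auto)
    also have "eqv n ... (map r (rev Xs) @ [] @ map r Xs)"
      by (rule eqv.ctxt[OF eqv.cancel[where e=True, simplified]]) (use a False vX in auto)
    also have "eqv n ... []" using rev_cancel[OF vX] by simp
    finally show ?thesis .
  qed
qed

lemma PL_sub_PT: "PL n \<subseteq> PT n"
proof
  fix x assume x: "x \<in> PL n"
  then have xT: "x \<in> TVP n" by (simp add: PL_def)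
  have lamc: "h0 n (lam n k l) = \<one>\<^bsub>TVB n\<^esub>" if "1 \<le> k \<and> k \<le> n \<and> 1 \<le> l \<and> l \<le> n \<and> k \<noteq> l" for k l
    using that unfolding lam_def by (simp add: h0_cls lam_valid TVB_one cls_eq phiPT_lam)
  have gamc: "h0 n (gam n j) = gam n j" if "1 \<le> j \<and> j \<le> n" for j
    using that unfolding gam_def by (simp add: h0_cls phiPT_word_def)
  have "h0 n x = \<one>\<^bsub>TVB n\<^esub>" using x h0_hom lamc gamc unfolding PL_def by blast
  moreover obtain w where w: "valid_word n w" "x = cls n w" "perm_word w = id" using TVP_elim xT by blast
  ultimately have "eqv n (phiPT_word w) []" by (simp add: h0_cls TVB_one cls_eq)
  moreover have "w \<in> x" using w by (simp add: mem_cls eqv.refl)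
  ultimately show "x \<in> PT n" using xT w unfolding PT_def TVP_def by auto
qed


definition cj :: "nat \<Rightarrow> word \<Rightarrow> word" where
  "cj a u = r a # u @ [r a]"

lemma cj_valid[simp]: "valid_word n (cj a u) = (1 \<le> a \<and> a < n \<and> valid_word n u)"
  by (auto simp: cj_def)

lemma cj_cong: "eqv n u v \<Longrightarrow> 1 \<le> a \<Longrightarrow> a < n \<Longrightarrow> eqv n (cj a u) (cj a v)"
  unfolding cj_def using eqv.ctxt[of n u v "[r a]" "[r a]"] by simp

lemma cj_cj: "valid_word n u \<Longrightarrow> 1 \<le> a \<Longrightarrow> a < n \<Longrightarrow> eqv n (cj a (cj a u)) u"
proof -
  assume a: "valid_word n u" "1 \<le> a" "a < n"
  have "eqv n (cj a (cj a u)) ([] @ [r a, r a] @ (u @ [r a, r a]))" by (rule eqv_eq) (use a in \<open>auto simp: cj_def\<close>)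
  also have "eqv n ... ([] @ [] @ (u @ [r a, r a]))" by (rule eqv.ctxt[OF rel_rr]) (use a in auto)
  also have "eqv n ... (u @ [r a, r a] @ [])" by (rule eqv_eq) (use a in auto)
  also have "eqv n ... (u @ [] @ [])" by (rule eqv.ctxt[OF rel_rr]) (use a in auto)
  finally show ?thesis by simp
qed

lemma cj_braid: "valid_word n u \<Longrightarrow> 1 \<le> a \<Longrightarrow> a + 1 < n \<Longrightarrow>
  eqv n (cj a (cj (a+1) (cj a u))) (cj (a+1) (cj a (cj (a+1) u)))"
proof -
  assume a: "valid_word n u" "1 \<le> a" "a + 1 < n"
  have "eqv n (cj a (cj (a+1) (cj a u))) ([] @ [r a, r (a+1), r a] @ (u @ [r a, r (a+1), r a]))"
    by (rule eqv_eq) (use a in \<open>auto simp: cj_def\<close>)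
  also have "eqv n ... ([] @ [r (a+1), r a, r (a+1)] @ (u @ [r a, r (a+1), r a]))"
    by (rule eqv.ctxt[OF rel_rbraid]) (use a in auto)
  also have "eqv n ... (([r (a+1), r a, r (a+1)] @ u) @ [r a, r (a+1), r a] @ [])" by (rule eqv_eq) (use a in auto)
  also have "eqv n ... (([r (a+1), r a, r (a+1)] @ u) @ [r (a+1), r a, r (a+1)] @ [])"
    by (rule eqv.ctxt[OF rel_rbraid]) (use a in auto)
  finally show ?thesis by (simp add: cj_def)
qed

lemma cj_braid': "valid_word n u \<Longrightarrow> 1 \<le> a \<Longrightarrow> a + 1 < n \<Longrightarrow>
  eqv n (cj (a+1) (cj a (cj (a+1) u))) (cj a (cj (a+1) (cj a u)))"
  using cj_braid eqv.sym by blast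

fun idx :: "gen \<Rightarrow> nat" where
  "idx (Sg i) = i" | "idx (Rg i) = i" | "idx (Gg j) = j"

definition far :: "nat \<Rightarrow> word \<Rightarrow> bool" where
  "far a u = (\<forall>y\<in>set u. (\<forall>j. fst y \<noteq> Gg j) \<and> (a + 2 \<le> idx (fst y) \<or> idx (fst y) + 2 \<le> a))"

lemma far_simps[simp]: "far a []" "far a (y # u) = ((\<forall>j. fst y \<noteq> Gg j) \<and> (a + 2 \<le> idx (fst y) \<or> idx (fst y) + 2 \<le> a) \<and> far a u)"
  "far a (u @ v) = (far a u \<and> far a v)"
  by (auto simp: far_def)

lemma s_inv_comm: "1 \<le> a \<Longrightarrow> a < n \<Longrightarrow> 1 \<le> x \<Longrightarrow> x < n \<Longrightarrow> a + 2 \<le> x \<or> x + 2 \<le> a \<Longrightarrow>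
   eqv n [r a, (Sg x, True)] [(Sg x, True), r a]"
proof -
  assume a: "1 \<le> a" "a < n" "1 \<le> x" "x < n" "a + 2 \<le> x \<or> x + 2 \<le> a"
  have "eqv n [r a, (Sg x, True)] ([] @ [(Sg x, True), s x] @ [r a, (Sg x, True)])"
    by (rule stepS[OF HOL.refl], rule eqv.cancel[where e=True, simplified]) (use a in auto)
  also have "eqv n ... ([(Sg x, True)] @ [s x, r a] @ [(Sg x, True)])" by (rule eqv_eq) (use a in auto)
  also have "eqv n ... ([(Sg x, True)] @ [r a, s x] @ [(Sg x, True)])"
    by (rule step[OF HOL.refl], rule rel_srcomm) (use a in auto)
  also have "eqv n ... ([(Sg x, True), r a] @ [s x, (Sg x, True)] @ [])" by (rule eqv_eq) (use a in auto)
  also have "eqv n ... ([(Sg x, True), r a] @ [] @ [])"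
    by (rule step[OF HOL.refl], rule eqv.cancel[where e=False, simplified]) (use a in auto)
  finally show ?thesis by simp
qed

lemma letter_comm: "1 \<le> a \<Longrightarrow> a < n \<Longrightarrow> valid_gen n (fst y) \<Longrightarrow> far a [y] \<Longrightarrow> eqv n [r a, y] [y, r a]"
proof -
  assume a: "1 \<le> a" "a < n" "valid_gen n (fst y)" "far a [y]"
  obtain x e where y: "y = (x, e)" by fastforce
  show ?thesis
  proof (cases x)
    case (Sg i)
    show ?thesis
    proof (cases e)
      case True then show ?thesis using s_inv_comm[of a n i] a y Sg by auto
    next
      case False then show ?thesis using rel_srcomm[of i n a] a y Sg by (auto intro: eqv.sym)
    qed
  next
    case (Rg i)
    show ?thesis
    proof (cases e)
      case True
      have i: "1 \<le> i" "i < n" using a y Rg by auto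
      have "eqv n [r a, y] ([r a] @ [r i] @ [])" using eqv.ctxt[OF r_inv[OF i], of "[r a]" "[]"] a y Rg True by simp
      also have "eqv n ... ([] @ [r i, r a] @ [])" by (rule step[OF HOL.refl], rule rel_rcomm) (use a y Rg in auto)
      also have "eqv n ... ([] @ [y] @ [r a])" using eqv.ctxt[OF eqv.sym[OF r_inv[OF i]], of "[]" "[r a]"] a y Rg True by simp
      finally show ?thesis by simp
    next
      case False then show ?thesis using rel_rcomm[of a n i] a y Rg by auto
    qed
  next
    case (Gg j) then show ?thesis using a y by simp
  qed
qed

lemma word_comm: "valid_word n u \<Longrightarrow> far a u \<Longrightarrow> 1 \<le> a \<Longrightarrow> a < n \<Longrightarrow> eqv n (r a # u) (u @ [r a])"
proof (induction u)
  case Nil then show ?case by (auto intro: eqv.refl)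
next
  case (Cons y u)
  have "eqv n (r a # y # u) ([] @ [r a, y] @ u)" by (rule eqv_eq) (use Cons in auto)
  also have "eqv n ... ([] @ [y, r a] @ u)" by (rule eqv.ctxt[OF letter_comm]) (use Cons in auto)
  also have "eqv n ... ([y] @ (r a # u) @ [])" by (rule eqv_eq) (use Cons in auto)
  also have "eqv n ... ([y] @ (u @ [r a]) @ [])" by (rule eqv.ctxt) (use Cons in auto)
  finally show ?case by simp
qed

lemma cj_far: "valid_word n u \<Longrightarrow> far a u \<Longrightarrow> 1 \<le> a \<Longrightarrow> a < n \<Longrightarrow> eqv n (cj a u) u"
proof -
  assume a: "valid_word n u" "far a u" "1 \<le> a" "a < n"
  have "eqv n (cj a u) ((r a # u) @ [r a])" by (rule eqv_eq) (use a in \<open>auto simp: cj_def\<close>)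
  also have "eqv n ... ((u @ [r a]) @ [r a])" by (rule eqv_appR[OF word_comm]) (use a in auto)
  also have "eqv n ... (u @ [r a, r a] @ [])" by (rule eqv_eq) (use a in auto)
  also have "eqv n ... (u @ [] @ [])" by (rule eqv.ctxt[OF rel_rr]) (use a in auto)
  finally show ?thesis by simp
qed

lemma cj_comm: "valid_word n u \<Longrightarrow> 1 \<le> a \<Longrightarrow> a < n \<Longrightarrow> 1 \<le> b \<Longrightarrow> b < n \<Longrightarrow> a + 2 \<le> b \<or> b + 2 \<le> a \<Longrightarrow>
  eqv n (cj a (cj b u)) (cj b (cj a u))"
proof -
  assume a: "valid_word n u" "1 \<le> a" "a < n" "1 \<le> b" "b < n" "a + 2 \<le> b \<or> b + 2 \<le> a"
  have "eqv n (cj a (cj b u)) ([] @ [r a, r b] @ (u @ [r b, r a]))" by (rule eqv_eq) (use a in \<open>auto simp: cj_def\<close>)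
  also have "eqv n ... ([] @ [r b, r a] @ (u @ [r b, r a]))" by (rule eqv.ctxt[OF rel_rcomm]) (use a in auto)
  also have "eqv n ... (([r b, r a] @ u) @ [r b, r a] @ [])" by (rule eqv_eq) (use a in auto)
  also have "eqv n ... (([r b, r a] @ u) @ [r a, r b] @ [])" 
    by (rule eqv.ctxt[OF rel_rcomm]) (use a in auto)
  finally show ?thesis by (simp add: cj_def)
qed

abbreviation lm :: "nat \<Rightarrow> word" where "lm i \<equiv> [r i, s' i]"

lemma B2: "1 \<le> i \<Longrightarrow> i + 1 < n \<Longrightarrow> eqv n (cj i (cj (i+1) (lm i))) (lm (i+1))"
proof -
  assume i: "1 \<le> i" "i + 1 < n"
  have "eqv n [r i, r (i+1), s' i, r (i+1), r i] ([] @ [s' (i+1), s (i+1)] @ [r i, r (i+1), s' i, r (i+1), r i])"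
    by (rule stepS[OF HOL.refl], rule eqv.cancel[where e=True, simplified]) (use i in auto)
  also have "eqv n ... ([s' (i+1)] @ [s (i+1), r i, r (i+1)] @ [s' i, r (i+1), r i])" by (rule eqv_eq) (use i in auto)
  also have "eqv n ... ([s' (i+1)] @ [r i, r (i+1), s i] @ [s' i, r (i+1), r i])"
    by (rule eqv.ctxt[OF eqv.sym[OF rel_mixed]]) (use i in auto)
  also have "eqv n ... ([s' (i+1), r i, r (i+1)] @ [s i, s' i] @ [r (i+1), r i])" by (rule eqv_eq) (use i in auto)
  also have "eqv n ... ([s' (i+1), r i, r (i+1)] @ [] @ [r (i+1), r i])"
    by (rule eqv.ctxt[OF eqv.cancel[where e=False, simplified]]) (use i in auto)
  also have "eqv n ... ([s' (i+1), r i] @ [r (i+1), r (i+1)] @ [r i])" by (rule eqv_eq) (use i in auto)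
  also have "eqv n ... ([s' (i+1), r i] @ [] @ [r i])" by (rule eqv.ctxt[OF rel_rr]) (use i in auto)
  also have "eqv n ... ([s' (i+1)] @ [r i, r i] @ [])" by (rule eqv_eq) (use i in auto)
  also have "eqv n ... ([s' (i+1)] @ [] @ [])" by (rule eqv.ctxt[OF rel_rr]) (use i in auto)
  finally have Y: "eqv n [r i, r (i+1), s' i, r (i+1), r i] [s' (i+1)]" by simp
  have "eqv n (cj i (cj (i+1) (lm i))) ([] @ [r i, r (i+1), r i] @ [s' i, r (i+1), r i])"
    by (rule eqv_eq) (use i in \<open>auto simp: cj_def\<close>)
  also have "eqv n ... ([] @ [r (i+1), r i, r (i+1)] @ [s' i, r (i+1), r i])"
    by (rule eqv.ctxt[OF rel_rbraid]) (use i in auto)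
  also have "eqv n ... ([r (i+1)] @ [r i, r (i+1), s' i, r (i+1), r i] @ [])" by (rule eqv_eq) (use i in auto)
  also have "eqv n ... ([r (i+1)] @ [s' (i+1)] @ [])" by (rule eqv.ctxt[OF Y]) (use i in auto)
  finally show ?thesis by simp
qed


abbreviation tr :: "nat \<Rightarrow> nat \<Rightarrow> nat" where "tr a x \<equiv> Transposition.transpose a (a+1) x"

lemma LW1: "lam_word k (Suc k) = lm k" by (simp add: lam_word_def)
lemma LW2: "lam_word (Suc l) l = cj l (lm l)" by (simp add: lam_word_def cj_def)
lemma LW3: "Suc k < l \<Longrightarrow> lam_word k l = cj (l - 1) (lam_word k (l - 1))"
proof -
  assume a: "Suc k < l"
  then obtain l' where l: "l = Suc l'" and "Suc k \<le> l'" by (cases l) auto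
  then have "[Suc k..<l] = [Suc k..<l'] @ [l']" by simp
  then show ?thesis using a l by (simp add: lam_word_def cj_def)
qed
lemma LW4: "Suc l < k \<Longrightarrow> lam_word k l = cj (k - 1) (lam_word (k - 1) l)"
proof -
  assume a: "Suc l < k"
  then obtain k' where k: "k = Suc k'" and "Suc l \<le> k'" by (cases k) auto
  then have "[Suc l..<k] = [Suc l..<k'] @ [k']" by simp
  then show ?thesis using a k by (simp add: lam_word_def cj_def)
qed

lemma lam_far: "k \<noteq> l \<Longrightarrow> a + 2 \<le> min k l \<or> max k l + 1 \<le> a \<Longrightarrow> far a (lam_word k l)"
  by (auto simp: lam_word_def far_def)

lemma lamv: "1 \<le> k \<Longrightarrow> k \<le> n \<Longrightarrow> 1 \<le> l \<Longrightarrow> l \<le> n \<Longrightarrow> k \<noteq> l \<Longrightarrow> valid_word n (lam_word k l)"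
  by (rule lam_valid)

lemma GL: "l - k = d \<Longrightarrow> k < l \<Longrightarrow> 1 \<le> a \<Longrightarrow> a < n \<Longrightarrow> 1 \<le> k \<Longrightarrow> l \<le> n \<Longrightarrow>
  eqv n (cj a (lam_word k l)) (lam_word (tr a k) (tr a l))"
proof (induction d arbitrary: k l a)
  case 0 then show ?case by simp
next
  case (Suc d)
  note h = Suc.prems
  show ?case
  proof (cases "d = 0")
    case True
    then have l: "l = Suc k" using h by simp
    have v: "valid_word n (lm k)" using h l by auto
    consider (1) "a = k" | (2) "a = k + 1" | (3) "a + 1 = k" | (4) "a + 2 \<le> k \<or> k + 2 \<le> a" by linarith
    then show ?thesis
    proof cases
      case 1 then show ?thesis using l h v by (intro eqv_eq) (auto simp: LW1 LW2)
    next
      case 2 then show ?thesis using l h v LW3[of k "k+2"] by (intro eqv_eq) (auto simp: LW1)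
    next
      case 3
      have b: "eqv n (lm (a+1)) (cj a (cj (a+1) (lm a)))" using B2[of a n] 3 l h by (auto intro: eqv.sym)
      have "eqv n (cj a (lam_word k l)) (cj a (cj a (cj (a+1) (lm a))))"
        using cj_cong[OF b, of a] 3 l h by (simp add: LW1)
      also have "eqv n ... (cj (a+1) (lm a))" by (rule cj_cj) (use 3 l h in auto)
      also have "cj (a+1) (lm a) = lam_word (tr a k) (tr a l)"
        using 3 l LW3[of a "a+2"] LW1[of a] by (simp add: transpose_def)
      finally show ?thesis .
    next
      case 4
      have "eqv n (cj a (lm k)) (lm k)" by (rule cj_far) (use 4 v h in auto)
      moreover have "tr a k = k" "tr a l = l" using 4 l by (auto simp: transpose_def)
      ultimately show ?thesis using l by (simp add: LW1)
    qed
  next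
    case False
    then have kl: "Suc k < l" using h by simp
    have u: "lam_word k l = cj (l - 1) (lam_word k (l - 1))" using LW3[OF kl] .
    have v': "valid_word n (lam_word k (l - 1))" using h kl by (intro lamv) auto
    consider (1) "a = l - 1" | (2) "a = l" | (3) "l + 1 \<le> a" | (4) "a + 3 \<le> l" | (5) "a + 2 = l" by linarith
    then show ?thesis
    proof cases
      case 1
      have "tr a k = k" "tr a l = l - 1" using 1 kl by (auto simp: transpose_def)
      then show ?thesis using 1 u cj_cj[OF v'] h by simp
    next
      case 2
      have "tr a k = k" "tr a l = l + 1" using 2 kl by (auto simp: transpose_def)
      then show ?thesis using 2 LW3[of k "l+1"] kl h lamv[of k n l] by (auto intro!: eqv_eq)
    next
      case 3
      have "tr a k = k" "tr a l = l" using 3 kl by (auto simp: transpose_def)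
      moreover have "eqv n (cj a (lam_word k l)) (lam_word k l)"
        by (rule cj_far) (use 3 kl h lamv[of k n l] lam_far[of k l a] in auto)
      ultimately show ?thesis by simp
    next
      case 4
      have t: "tr a (l - 1) = l - 1" "tr a l = l" using 4 by (auto simp: transpose_def)
      have tk: "Suc (tr a k) < l" "1 \<le> tr a k" using 4 kl h by (auto simp: transpose_def)
      have IH: "eqv n (cj a (lam_word k (l - 1))) (lam_word (tr a k) (tr a (l - 1)))"
        by (rule Suc.IH) (use h kl in auto)
      have "eqv n (cj a (lam_word k l)) (cj (l - 1) (cj a (lam_word k (l - 1))))"
        unfolding u by (rule cj_comm) (use 4 v' h in auto)
      also have "eqv n ... (cj (l - 1) (lam_word (tr a k) (l - 1)))"
        by (rule cj_cong) (use IH t h 4 in auto)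
      also have "cj (l - 1) (lam_word (tr a k) (l - 1)) = lam_word (tr a k) (tr a l)"
        using LW3[OF tk(1)] t by simp
      finally show ?thesis .
    next
      case 5
      show ?thesis
      proof (cases "k = a")
        case True
        have t: "tr a k = a + 1" "tr a l = a + 2" using 5 True by (auto simp: transpose_def)
        have "lam_word k l = cj (a+1) (lm a)" using u True LW1[of a] by (simp add: 5[symmetric])
        then have "eqv n (cj a (lam_word k l)) (lm (a+1))" using B2[of a n] 5 h True by simp
        then show ?thesis using t LW1[of "a+1"] by simp
      next
        case False
        then have ka: "k < a" using 5 kl by simp
        have t: "tr a k = k" "tr a l = l" using 5 ka by (auto simp: transpose_def)
        define w where "w = lam_word k a"
        have vw: "valid_word n w" using ka h 5 unfolding w_def by (intro lamv) auto
        have fw: "far (a+1) w" unfolding w_def using ka by (intro lam_far) auto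
        have u2: "lam_word k l = cj (a+1) (cj a w)" using u LW3[of k "a+1"] ka by (simp add: w_def 5[symmetric])
        have "eqv n (cj a (lam_word k l)) (cj (a+1) (cj a (cj (a+1) w)))"
          unfolding u2 by (rule cj_braid) (use vw h 5 in auto)
        also have "eqv n ... (cj (a+1) (cj a w))"
          by (intro cj_cong cj_far) (use vw fw h 5 in auto)
        finally show ?thesis using u2 t by simp
      qed
    qed
  qed
qed

lemma GR: "k - l = d \<Longrightarrow> l < k \<Longrightarrow> 1 \<le> a \<Longrightarrow> a < n \<Longrightarrow> 1 \<le> l \<Longrightarrow> k \<le> n \<Longrightarrow>
  eqv n (cj a (lam_word k l)) (lam_word (tr a k) (tr a l))"
proof (induction d arbitrary: k l a)
  case 0 then show ?case by simp
next
  case (Suc d)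
  note h = Suc.prems
  show ?case
  proof (cases "d = 0")
    case True
    then have k: "k = Suc l" using h by simp
    have v: "valid_word n (lm l)" using h k by auto
    consider (1) "a = l" | (2) "a = l + 1" | (3) "a + 1 = l" | (4) "a + 2 \<le> l \<or> l + 2 \<le> a" by linarith
    then show ?thesis
    proof cases
      case 1
      have "tr a k = l" "tr a l = Suc l" using 1 k by (auto simp: transpose_def)
      then show ?thesis using 1 k cj_cj[OF v, of a] h by (simp add: LW1 LW2)
    next
      case 2
      have "tr a k = l + 2" "tr a l = l" using 2 k by (auto simp: transpose_def)
      then show ?thesis using 2 k h v LW4[of l "l+2"] by (intro eqv_eq) (auto simp: LW2)
    next
      case 3
      have t: "tr a k = a + 2" "tr a l = a" using 3 k by (auto simp: transpose_def)
      have va: "valid_word n (lm a)" using 3 h by auto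
      have b: "eqv n (lm (a+1)) (cj a (cj (a+1) (lm a)))" using B2[of a n] 3 k h by (auto intro: eqv.sym)
      have "eqv n (cj a (lam_word k l)) (cj a (cj (a+1) (cj a (cj (a+1) (lm a)))))"
        using cj_cong[OF cj_cong[OF b, of "a+1"], of a] 3 k h by (simp add: LW2)
      also have "eqv n ... (cj (a+1) (cj a (cj (a+1) (cj (a+1) (lm a)))))"
        by (rule cj_braid) (use 3 k h va in auto)
      also have "eqv n ... (cj (a+1) (cj a (lm a)))"
        by (intro cj_cong cj_cj) (use 3 k h va in auto)
      also have "cj (a+1) (cj a (lm a)) = lam_word (tr a k) (tr a l)"
        using t LW4[of a "a+2"] LW2[of a] by simp
      finally show ?thesis .
    next
      case 4
      have "eqv n (cj a (lam_word k l)) (lam_word k l)"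
        by (rule cj_far) (use 4 k h lamv[of k n l] lam_far[of k l a] in auto)
      moreover have "tr a k = k" "tr a l = l" using 4 k by (auto simp: transpose_def)
      ultimately show ?thesis by simp
    qed
  next
    case False
    then have kl: "Suc l < k" using h by simp
    have u: "lam_word k l = cj (k - 1) (lam_word (k - 1) l)" using LW4[OF kl] .
    have v': "valid_word n (lam_word (k - 1) l)" using h kl by (intro lamv) auto
    consider (1) "a = k - 1" | (2) "a = k" | (3) "k + 1 \<le> a" | (4) "a + 3 \<le> k" | (5) "a + 2 = k" by linarith
    then show ?thesis
    proof cases
      case 1
      have "tr a l = l" "tr a k = k - 1" using 1 kl by (auto simp: transpose_def)
      then show ?thesis using 1 u cj_cj[OF v'] h by simp
    next
      case 2
      have "tr a l = l" "tr a k = k + 1" using 2 kl by (auto simp: transpose_def)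
      then show ?thesis using 2 LW4[of l "k+1"] kl h lamv[of k n l] by (auto intro!: eqv_eq)
    next
      case 3
      have "tr a k = k" "tr a l = l" using 3 kl by (auto simp: transpose_def)
      moreover have "eqv n (cj a (lam_word k l)) (lam_word k l)"
        by (rule cj_far) (use 3 kl h lamv[of k n l] lam_far[of k l a] in auto)
      ultimately show ?thesis by simp
    next
      case 4
      have t: "tr a (k - 1) = k - 1" "tr a k = k" using 4 by (auto simp: transpose_def)
      have tl: "Suc (tr a l) < k" "1 \<le> tr a l" using 4 kl h by (auto simp: transpose_def)
      have IH: "eqv n (cj a (lam_word (k - 1) l)) (lam_word (tr a (k - 1)) (tr a l))"
        by (rule Suc.IH) (use h kl in auto)
      have "eqv n (cj a (lam_word k l)) (cj (k - 1) (cj a (lam_word (k - 1) l)))"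
        unfolding u by (rule cj_comm) (use 4 v' h in auto)
      also have "eqv n ... (cj (k - 1) (lam_word (k - 1) (tr a l)))"
        by (rule cj_cong) (use IH t h 4 in auto)
      also have "cj (k - 1) (lam_word (k - 1) (tr a l)) = lam_word (tr a k) (tr a l)"
        using LW4[OF tl(1)] t by simp
      finally show ?thesis .
    next
      case 5
      show ?thesis
      proof (cases "l = a")
        case True
        have t: "tr a k = a + 2" "tr a l = a + 1" using 5 True by (auto simp: transpose_def)
        have va: "valid_word n (lm a)" using 5 h True by auto
        have "lam_word k l = cj (a+1) (cj a (lm a))" using u True LW2[of a] by (simp add: 5[symmetric])
        then have "eqv n (cj a (lam_word k l)) (cj (a+1) (cj a (cj (a+1) (lm a))))"
          using cj_braid[OF va, of a] 5 h True by simp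
        also have "eqv n ... (cj (a+1) (lm (a+1)))" by (rule cj_cong[OF B2]) (use 5 h True in auto)
        finally show ?thesis using t LW2[of "a+1"] by simp
      next
        case False
        then have la: "l < a" using 5 kl by simp
        have t: "tr a k = k" "tr a l = l" using 5 la by (auto simp: transpose_def)
        define w where "w = lam_word a l"
        have vw: "valid_word n w" using la h 5 unfolding w_def by (intro lamv) auto
        have fw: "far (a+1) w" unfolding w_def using la by (intro lam_far) auto
        have u2: "lam_word k l = cj (a+1) (cj a w)" using u LW4[of l "a+1"] la by (simp add: w_def 5[symmetric])
        have "eqv n (cj a (lam_word k l)) (cj (a+1) (cj a (cj (a+1) w)))"
          unfolding u2 by (rule cj_braid) (use vw h 5 in auto)
        also have "eqv n ... (cj (a+1) (cj a w))"
          by (intro cj_cong cj_far) (use vw fw h 5 in auto)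
        finally show ?thesis using u2 t by simp
      qed
    qed
  qed
qed

lemma G: "1 \<le> a \<Longrightarrow> a < n \<Longrightarrow> 1 \<le> k \<Longrightarrow> k \<le> n \<Longrightarrow> 1 \<le> l \<Longrightarrow> l \<le> n \<Longrightarrow> k \<noteq> l \<Longrightarrow>
  eqv n (cj a (lam_word k l)) (lam_word (tr a k) (tr a l))"
  using GL[of l k _ a n] GR[of k l _ a n] by (cases "k < l") auto


lemma M: "validR n R \<Longrightarrow> 1 \<le> i \<Longrightarrow> i < n \<Longrightarrow>
  eqv n (map r R @ lm i @ map r (rev R)) (lam_word (perm_word (map r R) i) (perm_word (map r R) (i+1)))"
proof (induction R)
  case Nil then show ?case by (intro eqv_eq) (auto simp: LW1[simplified])
next
  case (Cons a R)
  let ?k = "perm_word (map r R) i" and ?l = "perm_word (map r R) (i+1)"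
  have kl: "1 \<le> ?k" "?k \<le> n" "1 \<le> ?l" "?l \<le> n" using perm_range[of n R] Cons by auto
  have ne: "?k \<noteq> ?l" using perm_inj[of "map r R" i "i+1"] by auto
  have "eqv n (map r (a # R) @ lm i @ map r (rev (a # R))) (cj a (map r R @ lm i @ map r (rev R)))"
    by (rule eqv_eq) (use Cons in \<open>auto simp: cj_def\<close>)
  also have "eqv n ... (cj a (lam_word ?k ?l))" by (rule cj_cong) (use Cons in auto)
  also have "eqv n ... (lam_word (tr a ?k) (tr a ?l))" by (rule G) (use Cons kl ne in auto)
  finally show ?case by simp
qed

lemma winv_map_r: "validR n R \<Longrightarrow> eqv n (winv (map r R)) (map r (rev R))"
proof (induction R)
  case Nil then show ?case by (simp add: eqv.refl)
next
  case (Cons a R)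
  have "eqv n (winv (map r R) @ [(Rg a, True)]) (map r (rev R) @ [r a])"
    by (rule eqv_app) (use Cons r_inv in auto)
  then show ?case by simp
qed

lemma perm_conj: "perm_word v = id \<Longrightarrow> perm_word (u @ v @ winv u) = id"
  by (auto simp: fun_eq_iff perm_winv2)

lemma perm_lm: "perm_word (lm i) = id" by (auto simp: fun_eq_iff)

lemma perm_winv_id: "perm_word w = id \<Longrightarrow> perm_word (winv w) = id"
  using perm_winv2[of w] by (auto simp: fun_eq_iff)

lemma winv_triv: "eqv n u [] \<Longrightarrow> eqv n (winv u) []"
proof -
  assume u: "eqv n u []"
  then have v: "valid_word n u" using eqv_valid by blast
  have "eqv n (winv u) (winv u @ [])" using v by (simp add: eqv.refl)
  also have "eqv n ... (winv u @ u)" using eqv_appL[OF eqv.sym[OF u], of "winv u"] v by simp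
  also have "eqv n ... []" using eqv_winv_l v by blast
  finally show ?thesis .
qed

context
  fixes n :: nat and h :: "word set \<Rightarrow> word set"
  assumes H1: "h \<in> hom ((TVB n)\<lparr>carrier := TVP n\<rparr>) ((TVB n)\<lparr>carrier := A n\<rparr>)"
  and H2: "\<forall>k l. 1 \<le> k \<and> k \<le> n \<and> 1 \<le> l \<and> l \<le> n \<and> k \<noteq> l \<longrightarrow> h (lam n k l) = \<one>\<^bsub>TVB n\<^esub>"
begin

lemma A_carrier: "A n \<subseteq> carrier (TVB n)"
  unfolding A_def by (rule group.generate_incl[OF TVB_group]) (auto simp: gam_def)

lemma hc: "x \<in> TVP n \<Longrightarrow> h x \<in> carrier (TVB n)"
  using hom_in_carrier[OF H1, of x] A_carrier by auto

lemma hmul: "x \<in> TVP n \<Longrightarrow> y \<in> TVP n \<Longrightarrow> h (x \<otimes>\<^bsub>TVB n\<^esub> y) = h x \<otimes>\<^bsub>TVB n\<^esub> h y"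
  using hom_mult[OF H1, of x y] by simp

lemma h_one: "h (cls n []) = cls n []"
proof -
  have t: "cls n [] \<in> TVP n" by (rule TVP_intro) auto
  have "h (cls n []) = h (cls n [] \<otimes>\<^bsub>TVB n\<^esub> cls n [])" by (simp add: TVB_mult)
  also have "... = h (cls n []) \<otimes>\<^bsub>TVB n\<^esub> h (cls n [])" using hmul[OF t t] .
  finally have "h (cls n []) \<otimes>\<^bsub>TVB n\<^esub> h (cls n []) = h (cls n [])" by simp
  then show ?thesis using group.l_cancel_one[OF TVB_group hc[OF t] hc[OF t]] by (simp add: TVB_one)
qed

lemma TVP_cls: "valid_word n w \<Longrightarrow> perm_word w = id \<Longrightarrow> cls n w \<in> TVP n" by (rule TVP_intro)

lemma h_winv: "valid_word n w \<Longrightarrow> perm_word w = id \<Longrightarrow> h (cls n w) = cls n [] \<Longrightarrow> h (cls n (winv w)) = cls n []"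
proof -
  assume w: "valid_word n w" "perm_word w = id" "h (cls n w) = cls n []"
  have pw: "perm_word (winv w) = id" using w perm_winv2[of w] perm_winv[of w] by (auto simp: fun_eq_iff)
  have t1: "cls n w \<in> TVP n" and t2: "cls n (winv w) \<in> TVP n" using w pw by (auto intro: TVP_cls)
  have "cls n [] = h (cls n (w @ winv w))" using h_one cls_eq eqv_winv_r w by (metis valid_word_simps(1,3) winv_simps(4))
  also have "... = h (cls n w \<otimes>\<^bsub>TVB n\<^esub> cls n (winv w))" using w by (simp add: TVB_mult)
  also have "... = cls n [] \<otimes>\<^bsub>TVB n\<^esub> h (cls n (winv w))" using hmul[OF t1 t2] w by simp
  also have "... = h (cls n (winv w))" using group.is_monoid[OF TVB_group] hc[OF t2] monoid.l_one[of "TVB n"]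
    by (simp add: TVB_one)
  finally show ?thesis by simp
qed

lemma Kbase: "validR n R \<Longrightarrow> 1 \<le> i \<Longrightarrow> i < n \<Longrightarrow>
  perm_word (map r R @ lm i @ winv (map r R)) = id \<and> h (cls n (map r R @ lm i @ winv (map r R))) = cls n []"
proof -
  assume a: "validR n R" "1 \<le> i" "i < n"
  let ?k = "perm_word (map r R) i" and ?l = "perm_word (map r R) (i+1)"
  have kl: "1 \<le> ?k" "?k \<le> n" "1 \<le> ?l" "?l \<le> n" using perm_range[of n R] a by auto
  have ne: "?k \<noteq> ?l" using perm_inj[of "map r R" i "i+1"] by auto
  have "eqv n (map r R @ lm i @ winv (map r R)) (map r R @ lm i @ map r (rev R))"
    by (rule eqv_appL, rule eqv_appL, rule winv_map_r) (use a in auto)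
  also have "eqv n ... (lam_word ?k ?l)" by (rule M) (use a in auto)
  finally have e: "eqv n (map r R @ lm i @ winv (map r R)) (lam_word ?k ?l)" .
  have "cls n (map r R @ lm i @ winv (map r R)) = lam n ?k ?l"
    unfolding lam_def using e cls_eq eqv_valid by blast
  then show ?thesis using H2 kl ne a perm_conj[OF perm_lm[of i], of "map r R"] by (auto simp: TVB_one)
qed

lemma Kfull: "ts P \<Longrightarrow> valid_word n P \<Longrightarrow> 1 \<le> i \<Longrightarrow> i < n \<Longrightarrow>
  perm_word (P @ [(Sg i, e), (Rg i, \<not> e)] @ winv P) = id \<and>
  h (cls n (P @ [(Sg i, e), (Rg i, \<not> e)] @ winv P)) = cls n []"
proof -
  assume a: "ts P" "valid_word n P" "1 \<le> i" "i < n"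
  obtain js R where jR: "\<forall>j\<in>set js. 1 \<le> j \<and> j \<le> n" "validR n R" "eqv n P (map g js @ map r R)"
    using ts_decomp[OF a(1,2)] by blast
  let ?L = "[(Sg i, e), (Rg i, \<not> e)]"
  let ?G = "map g js" and ?Rr = "map r R"
  have pL: "perm_word ?L = id" by (auto simp: fun_eq_iff)
  have perm1: "perm_word (P @ ?L @ winv P) = id" using pL by (rule perm_conj)
  obtain W where W: "valid_word n W" "perm_word W = id" "h (cls n W) = cls n []"
     "eqv n (?Rr @ ?L @ winv ?Rr) W"
  proof (cases e)
    case False
    define W where "W = winv (?Rr @ lm i @ winv ?Rr)"
    have vW: "valid_word n (?Rr @ lm i @ winv ?Rr)" using a jR by auto
    have K: "perm_word (?Rr @ lm i @ winv ?Rr) = id" "h (cls n (?Rr @ lm i @ winv ?Rr)) = cls n []"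
      using Kbase[OF jR(2) a(3,4)] by auto
    have 1: "perm_word W = id" unfolding W_def by (rule perm_winv_id[OF K(1)])
    have 2: "h (cls n W) = cls n []" unfolding W_def by (rule h_winv[OF vW K])
    have 3: "W = ?Rr @ ?L @ winv ?Rr" using False by (simp add: W_def)
    have 4: "valid_word n W" using vW by (simp add: W_def del: winv_simps(3))
    show ?thesis using that[OF 4 1 2] 3 4 eqv.refl by metis
  next
    case True
    define W where "W = map r (R @ [i]) @ lm i @ winv (map r (R @ [i]))"
    have K: "perm_word W = id" "h (cls n W) = cls n []"
      using Kbase[of "R @ [i]" i] jR(2) a unfolding W_def by auto
    have vW: "valid_word n W" using a jR unfolding W_def by auto
    have "eqv n (?Rr @ ?L @ winv ?Rr) (?Rr @ [] @ [(Sg i, True), r i] @ winv ?Rr)"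
      using True a jR by (intro eqv_eq) auto
    also have "eqv n ... (?Rr @ [r i, r i] @ [(Sg i, True), r i] @ winv ?Rr)"
      by (rule eqv.ctxt[OF eqv.sym[OF rel_rr]]) (use a jR in auto)
    also have "eqv n ... ((?Rr @ [r i] @ lm i) @ [r i] @ winv ?Rr)" by (rule eqv_eq) (use a jR in auto)
    also have "eqv n ... ((?Rr @ [r i] @ lm i) @ [(Rg i, True)] @ winv ?Rr)"
      by (rule eqv.ctxt[OF eqv.sym[OF r_inv]]) (use a jR in auto)
    also have "eqv n ... W" by (rule eqv_eq) (use a jR in \<open>auto simp: W_def\<close>)
    finally show ?thesis using that K vW by auto
  qed
  have pG: "perm_word ?G = id" "perm_word (winv ?G) = id" using perm_winv2[of ?G] by (auto simp: fun_eq_iff)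
  have vG: "valid_word n ?G" using jR by auto
  have e1: "eqv n (P @ ?L @ winv P) (?G @ (?Rr @ ?L @ winv ?Rr) @ winv ?G)"
  proof -
    have "eqv n (P @ ?L @ winv P) ((?G @ ?Rr) @ ?L @ winv (?G @ ?Rr))"
    proof -
      have "eqv n (winv P) (winv (?G @ ?Rr))"
      proof -
        have vP: "valid_word n (?G @ ?Rr)" using jR eqv_valid by blast
        have "eqv n (winv P) ((winv P @ (?G @ ?Rr)) @ winv (?G @ ?Rr))"
          using eqv_appL[OF eqv.sym[OF eqv_winv_r[OF vP]], of "winv P"] a by simp
        also have "eqv n ... ((winv P @ P) @ winv (?G @ ?Rr))"
          by (rule eqv_appR, rule eqv_appL[OF eqv.sym[OF jR(3)]]) (use a vP in auto)
        also have "eqv n ... ([] @ winv (?G @ ?Rr))"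
          by (rule eqv_appR[OF eqv_winv_l]) (use a vP in auto)
        finally show ?thesis by simp
      qed
      moreover have "valid_word n ?L" using a by auto
      ultimately show ?thesis by (intro eqv_app[OF jR(3)] eqv_app[OF eqv.refl])
    qed
    then show ?thesis by simp
  qed
  have cG: "cls n ?G \<in> TVP n" "cls n (winv ?G) \<in> TVP n" "cls n W \<in> TVP n"
    using pG vG W by (auto intro: TVP_cls)
  have "cls n (P @ ?L @ winv P) = cls n (?G @ W @ winv ?G)"
  proof -
    have "eqv n (?G @ (?Rr @ ?L @ winv ?Rr) @ winv ?G) (?G @ W @ winv ?G)"
      by (rule eqv.ctxt[OF W(4)]) (use vG in auto)
    then have e2: "eqv n (P @ ?L @ winv P) (?G @ W @ winv ?G)" using e1 by (rule eqv.trans[rotated])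
    then show ?thesis using cls_eq[of n "P @ ?L @ winv P" "?G @ W @ winv ?G"] eqv_valid[OF e2] by simp
  qed
  also have "... = cls n ?G \<otimes>\<^bsub>TVB n\<^esub> (cls n W \<otimes>\<^bsub>TVB n\<^esub> cls n (winv ?G))"
    using vG W by (simp add: TVB_mult)
  finally have z: "cls n (P @ ?L @ winv P) = cls n ?G \<otimes>\<^bsub>TVB n\<^esub> (cls n W \<otimes>\<^bsub>TVB n\<^esub> cls n (winv ?G))" .
  have cWG: "cls n W \<otimes>\<^bsub>TVB n\<^esub> cls n (winv ?G) \<in> TVP n"
    using vG W pG by (simp add: TVB_mult TVP_cls)
  have "h (cls n (P @ ?L @ winv P)) = h (cls n ?G) \<otimes>\<^bsub>TVB n\<^esub> (h (cls n W) \<otimes>\<^bsub>TVB n\<^esub> h (cls n (winv ?G)))"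
    unfolding z using hmul[OF cG(1) cWG] hmul[OF cG(3) cG(2)] by simp
  also have "... = h (cls n ?G) \<otimes>\<^bsub>TVB n\<^esub> h (cls n (winv ?G))"
    using W(3) monoid.l_one[OF group.is_monoid[OF TVB_group] hc[OF cG(2)]] by (simp add: TVB_one)
  also have "... = h (cls n (?G @ winv ?G))" using hmul[OF cG(1) cG(2)] vG by (simp add: TVB_mult)
  also have "... = h (cls n [])" using cls_eq[of n "?G @ winv ?G" "[]"] eqv_winv_r[OF vG] vG by simp
  also have "... = cls n []" by (rule h_one)
  finally show ?thesis using perm1 by simp
qed

lemma Q: "valid_word n w \<Longrightarrow> ts p \<Longrightarrow> valid_word n p \<Longrightarrow>
  perm_word (p @ w @ winv (p @ phiPT_word w)) = id \<and> h (cls n (p @ w @ winv (p @ phiPT_word w))) = cls n []"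
proof (induction w rule: rev_induct)
  case Nil
  have "cls n (p @ winv p) = cls n []" using cls_eq[of n "p @ winv p" "[]"] eqv_winv_r[OF Nil(3)] Nil(3) by simp
  then show ?case using h_one perm_conj[of "[]" p] by simp
next
  case (snoc a w)
  define P where "P = p @ phiPT_word w"
  define a' where "a' = (subst_gen (fst a), snd a)"
  have va: "valid_gen n (fst a)" using snoc by simp
  have vw: "valid_word n w" using snoc by simp
  have vP: "valid_word n P" "ts P" using snoc vw by (auto simp: P_def)
  define W1 where "W1 = p @ w @ winv P"
  define W2 where "W2 = P @ [a] @ winv [a'] @ winv P"
  have IH: "perm_word W1 = id" "h (cls n W1) = cls n []" using snoc.IH[OF vw snoc(3,4)] by (auto simp: W1_def P_def fun_eq_iff)
  have vW1: "valid_word n W1" using vw snoc vP by (simp add: W1_def)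
  have vW2: "valid_word n W2" using va vP by (simp add: W2_def a'_def)
  have Wd: "p @ (w @ [a]) @ winv (p @ phiPT_word (w @ [a])) = (p @ w) @ [] @ ([a] @ winv [a'] @ winv P)"
    by (simp add: P_def a'_def)
  have "eqv n ((p @ w) @ [] @ ([a] @ winv [a'] @ winv P)) ((p @ w) @ (winv P @ P) @ ([a] @ winv [a'] @ winv P))"
    by (rule eqv.ctxt[OF eqv.sym[OF eqv_winv_l]]) (use vP vw snoc va in \<open>auto simp: a'_def\<close>)
  then have e: "eqv n (p @ (w @ [a]) @ winv (p @ phiPT_word (w @ [a]))) (W1 @ W2)"
    unfolding Wd by (simp add: W1_def W2_def)
  have pa: "perm_word ([a] @ winv [a']) = id" by (auto simp: fun_eq_iff a'_def)
  have pW2: "perm_word W2 = id" using perm_conj[OF pa, of P] by (simp add: W2_def)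
  have hW2: "h (cls n W2) = cls n []"
  proof (cases "\<exists>i. fst a = Sg i")
    case True
    then obtain i e where ai: "a = (Sg i, e)" by (metis prod.collapse)
    have i: "1 \<le> i" "i < n" using va ai by auto
    have "W2 = P @ [(Sg i, e), (Rg i, \<not> e)] @ winv P" by (simp add: W2_def a'_def ai)
    then show ?thesis using Kfull[OF vP(2) vP(1) i, of e] by simp
  next
    case False
    obtain x e where ae: "a = (x, e)" by fastforce
    have "a' = a" using False by (cases x) (auto simp: a'_def ae)
    then have w2: "W2 = P @ [(fst a, snd a), (fst a, \<not> snd a)] @ winv P" by (simp add: W2_def)
    have "eqv n W2 (P @ [] @ winv P)" unfolding w2
      by (rule eqv.ctxt[OF eqv.cancel]) (use va vP in auto)
    also have "eqv n ... []" using eqv_winv_r[OF vP(1)] by simp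
    finally have "cls n W2 = cls n []" using cls_eq[of n W2 "[]"] vW2 by simp
    then show ?thesis using h_one by simp
  qed
  have t1: "cls n W1 \<in> TVP n" "cls n W2 \<in> TVP n" using IH pW2 vW1 vW2 by (auto intro: TVP_cls)
  have "cls n (p @ (w @ [a]) @ winv (p @ phiPT_word (w @ [a]))) = cls n W1 \<otimes>\<^bsub>TVB n\<^esub> cls n W2"
    using e cls_eq eqv_valid[OF e] vW1 vW2 by (simp add: TVB_mult)
  then have "h (cls n (p @ (w @ [a]) @ winv (p @ phiPT_word (w @ [a])))) = cls n []"
    using hmul[OF t1] IH hW2 monoid.l_one[OF group.is_monoid[OF TVB_group], of "cls n []" ] by (simp add: TVB_one)
  moreover have "perm_word (p @ (w @ [a]) @ winv (p @ phiPT_word (w @ [a]))) = id"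
    using perm_eqv[OF e] IH pW2 by simp
  ultimately show ?case by simp
qed

end

lemma PT_sub_PL: "PT n \<subseteq> PL n"
proof
  fix x assume x: "x \<in> PT n"
  then obtain w where w: "w \<in> x" "eqv n (phiPT_word w) []" "x \<in> carrier (TVB n)" by (auto simp: PT_def)
  then have vx: "valid_word n w" "x = cls n w" using carrier_elim by auto
  have e: "eqv n (w @ winv (phiPT_word w)) w"
    using eqv_appL[OF winv_triv[OF w(2)], of w] vx by simp
  have "cls n (w @ winv (phiPT_word w)) = cls n w"
    using cls_eq[of n "w @ winv (phiPT_word w)" w] eqv_valid[OF e] e by simp
  then have xw: "x = cls n (w @ winv (phiPT_word w))" using vx by simp
  have pw: "perm_word (w @ winv (phiPT_word w)) = id"
    using perm_winv2[of "phiPT_word w"] by (simp add: fun_eq_iff)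
  have "x \<in> TVP n" unfolding xw by (rule TVP_intro) (use vx pw in auto)
  moreover have "h x = \<one>\<^bsub>TVB n\<^esub>"
    if H: "h \<in> hom ((TVB n)\<lparr>carrier := TVP n\<rparr>) ((TVB n)\<lparr>carrier := A n\<rparr>)"
      "\<forall>k l. 1 \<le> k \<and> k \<le> n \<and> 1 \<le> l \<and> l \<le> n \<and> k \<noteq> l \<longrightarrow> h (lam n k l) = \<one>\<^bsub>TVB n\<^esub>" for h
    using Q[OF H, of w "[]"] vx xw by (simp add: TVB_one)
  ultimately show "x \<in> PL n" unfolding PL_def by blast
qed

lemma PT_eq_PL: "PT n = PL n" using PT_sub_PL PL_sub_PT by blast


theorem mainTheorem16:
  fixes n :: nat
  assumes "n \<ge> 2"
  shows "(TVB n)\<lparr>carrier := PT n\<rparr> \<cong> (TVB n)\<lparr>carrier := PL n\<rparr>"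
  by (simp add: PT_eq_PL)

end
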